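(* Let $\mathcal{U}$ be a finite alphabet, $p_{UX}$ a distribution on $\mathcal{U}\times\mathcal{X}$, and consider the random code ensemble described in the context with the randomization index $K$ uniform on $\{1,\dots,2^{nR_r}\}$. If $R_r>I(X;Z|U)$, then there exists $\beta>0$ such that for all sufficiently large $n$, $$\mathbb{E}_{\mathcal{C}_n}\Big[\mathbb{V}\big(p_{MZ^n},\,p_M\,p_{Z^n}\big)\Big]\le 2^{-\beta n},$$ where the expectation is over the random codebook $\mathcal{C}_n$ and $p_{MZ^n}$ is the joint distribution of $(M,Z^n)$ induced by a given codebook.
   Context: All logarithms are base 2. $W_{YZ|X}$ is a discrete memoryless wiretap channel with finite alphabets, used memorylessly; the joint distribution of $(U,X,Y,Z)$ is $p_{UX}(u,x)W_{YZ|X}(y,z|x)$. Random code ensemble: fix rates $R_0,R,R_r>0$ and $n$. Generate $U^n(i)$, $i\in\{1,\dots,2^{nR_0}\}$, independently, each i.i.d. with law $p_U$; for each $i$, generate $X^n(i,j,k)$, $j\in\{1,\dots,2^{nR}\}$, $k\in\{1,\dots,2^{nR_r}\}$, conditionally independently with law $\prod_{t=1}^n p_{X|U}(\cdot|U_t(i))$. The indices $M_0$ and $M$ are independent and uniform on $\{1,\dots,2^{nR_0}\}$ and $\{1,\dots,2^{nR}\}$, and independent of a randomization index $K\in\{1,\dots,2^{nR_r}\}$; the transmitted word is $X^n(M_0,M,K)$ and $Z^n$ is the eavesdropper's output of $W^n$. The variational distance is $\mathbb{V}(p,q)=\sum_a|p(a)-q(a)|$. *)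

theory Defs
  imports "HOL-Probability.Probability"
begin

text \<open>Variational distance V(p,q) = sum_a |p(a) - q(a)| (unnormalised, as in the paper).\<close>
definition var_dist :: "'a pmf \<Rightarrow> 'a pmf \<Rightarrow> real" where
  "var_dist p q = (\<Sum>\<^sub>\<infinity>a. \<bar>pmf p a - pmf q a\<bar>)"

text \<open>Conditional mutual information I(X;Z|U) (base-2 logs) of a joint pmf on U x X x Z
  over finite alphabets, with the convention 0 log 0 = 0.\<close>
definition cond_mutual_info :: "('u::finite \<times> 'x::finite \<times> 'z::finite) pmf \<Rightarrow> real" where
  "cond_mutual_info P =
     (let pU  = (\<lambda>u. \<Sum>x\<in>UNIV. \<Sum>z\<in>UNIV. pmf P (u, x, z));
          pUX = (\<lambda>u x. \<Sum>z\<in>UNIV. pmf P (u, x, z));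
          pUZ = (\<lambda>u z. \<Sum>x\<in>UNIV. pmf P (u, x, z))
      in \<Sum>(u, x, z) \<in> {t. pmf P t > 0}.
           pmf P (u, x, z) * log 2 (pmf P (u, x, z) * pU u / (pUX u x * pUZ u z)))"

definition UXZ_pmf :: "('u \<times> 'x) pmf \<Rightarrow> ('x \<Rightarrow> ('y \<times> 'z) pmf) \<Rightarrow> ('u \<times> 'x \<times> 'z) pmf" where
  "UXZ_pmf pUX W = do { (u, x) \<leftarrow> pUX; (y, z) \<leftarrow> W x; return_pmf (u, x, z) }"

definition cond_X_given_U :: "('u \<times> 'x) pmf \<Rightarrow> 'u \<Rightarrow> 'x pmf" where
  "cond_X_given_U pUX u = map_pmf snd (cond_pmf pUX {p. fst p = u})"

definition num_idx :: "nat \<Rightarrow> real \<Rightarrow> nat" where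
  "num_idx n r = nat \<lceil>2 powr (real n * r)\<rceil>"

text \<open>A codebook: U-codewords indexed by (i,t) and X-codewords indexed by (i,j,k,t),
  all indices 0-based: i < 2^{nR0}, j < 2^{nR}, k < 2^{nRr}, t < n.\<close>
type_synonym ('u, 'x) codebook = "((nat \<times> nat) \<Rightarrow> 'u) \<times> ((nat \<times> nat \<times> nat \<times> nat) \<Rightarrow> 'x)"

definition codebook_pmf ::
  "('u \<times> 'x) pmf \<Rightarrow> nat \<Rightarrow> real \<Rightarrow> real \<Rightarrow> real \<Rightarrow> ('u, 'x) codebook pmf" where
  "codebook_pmf pUX n R0 R Rr =
     do { cu \<leftarrow> Pi_pmf ({..<num_idx n R0} \<times> {..<n}) undefined (\<lambda>_. map_pmf fst pUX);
          cx \<leftarrow> Pi_pmf ({..<num_idx n R0} \<times> {..<num_idx n R} \<times> {..<num_idx n Rr} \<times> {..<n}) undefined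
                  (\<lambda>(i, j, k, t). cond_X_given_U pUX (cu (i, t)));
          return_pmf (cu, cx) }"

text \<open>Joint law of (M, Z^n) induced by a fixed codebook; Z^n is represented as a function
  on {..<n} (value undefined outside).\<close>
definition MZ_pmf ::
  "('x \<Rightarrow> ('y \<times> 'z) pmf) \<Rightarrow> nat \<Rightarrow> real \<Rightarrow> real \<Rightarrow> real \<Rightarrow> ('u, 'x) codebook \<Rightarrow> (nat \<times> (nat \<Rightarrow> 'z)) pmf" where
  "MZ_pmf W n R0 R Rr C =
     do { m0 \<leftarrow> pmf_of_set {..<num_idx n R0};
          m  \<leftarrow> pmf_of_set {..<num_idx n R};
          k  \<leftarrow> pmf_of_set {..<num_idx n Rr};
          zs \<leftarrow> Pi_pmf {..<n} undefined (\<lambda>t. map_pmf snd (W (snd C (m0, m, k, t))));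
          return_pmf (m, zs) }"

end

theory Submission
  imports Defs
begin


lemma finite_set_Pi_pmf:
  assumes "finite A" "\<And>a. a \<in> A \<Longrightarrow> finite (set_pmf (p a))"
  shows "finite (set_pmf (Pi_pmf A d p))"
  using assms by (subst set_Pi_pmf) (auto intro!: finite_PiE_dflt)

lemma finite_set_pmf_ft: "finite (set_pmf (p :: 'a::finite pmf))"
  by simp

lemma var_dist_finite:
  assumes "finite S" "\<And>a. a \<notin> S \<Longrightarrow> pmf p a = 0" "\<And>a. a \<notin> S \<Longrightarrow> pmf q a = 0"
  shows "var_dist p q = (\<Sum>a\<in>S. \<bar>pmf p a - pmf q a\<bar>)"
proof -
  have "var_dist p q = infsum (\<lambda>a. \<bar>pmf p a - pmf q a\<bar>) S"
    unfolding var_dist_def using assms by (intro infsum_cong_neutral) auto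
  also have "\<dots> = (\<Sum>a\<in>S. \<bar>pmf p a - pmf q a\<bar>)" using assms(1) by simp
  finally show ?thesis .
qed

lemma Pi_pmf_reindex_image:
  assumes "finite B" "inj g"
  shows "map_pmf (\<lambda>x. x \<circ> g) (Pi_pmf (g ` B) d F) = Pi_pmf B d (F \<circ> g)"
  using assms(1)
proof (induction rule: finite_induct)
  case empty
  then show ?case by (simp add: o_def)
next
  case (insert b B)
  have nb: "g b \<notin> g ` B" using insert.hyps assms(2) by (auto dest: injD)
  have "map_pmf (\<lambda>x. x \<circ> g) (Pi_pmf (g ` insert b B) d F)
      = map_pmf (\<lambda>x. x \<circ> g) (map_pmf (\<lambda>(y, f). f(g b := y)) (pair_pmf (F (g b)) (Pi_pmf (g ` B) d F)))"
    using nb insert.hyps by (simp add: Pi_pmf_insert)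
  also have "\<dots> = map_pmf (\<lambda>(y, f). f(b := y)) (map_pmf (\<lambda>(y,f). (y, f \<circ> g)) (pair_pmf (F (g b)) (Pi_pmf (g ` B) d F)))"
    unfolding pmf.map_comp
  proof (intro pmf.map_cong refl)
    fix z assume "z \<in> set_pmf (pair_pmf (F (g b)) (Pi_pmf (g ` B) d F))"
    show "((\<lambda>x. x \<circ> g) \<circ> (\<lambda>(y, f). f(g b := y))) z = ((\<lambda>(y, f). f(b := y)) \<circ> (\<lambda>(y, f). (y, f \<circ> g))) z"
      using assms(2) by (cases z) (auto simp: fun_eq_iff dest: injD)
  qed
  also have "map_pmf (\<lambda>(y,f). (y, f \<circ> g)) (pair_pmf (F (g b)) (Pi_pmf (g ` B) d F))
      = pair_pmf (F (g b)) (map_pmf (\<lambda>x. x \<circ> g) (Pi_pmf (g ` B) d F))"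
    unfolding pair_map_pmf2 by (intro pmf.map_cong) (auto simp: apsnd_def)
  also have "\<dots> = pair_pmf ((F \<circ> g) b) (Pi_pmf B d (F \<circ> g))"
    using insert.IH by (metis comp_apply)
  also have "map_pmf (\<lambda>(y, f). f(b := y)) \<dots> = Pi_pmf (insert b B) d (F \<circ> g)"
    using insert.hyps by (simp add: Pi_pmf_insert)
  finally show ?case .
qed

lemma Pi_pmf_reindex:
  assumes "finite A" "finite B" "inj g" "\<And>b. g b \<in> A \<longleftrightarrow> b \<in> B"
  shows "map_pmf (\<lambda>x. x \<circ> g) (Pi_pmf A d F) = Pi_pmf B d (F \<circ> g)"
proof -
  have sub: "g ` B \<subseteq> A" by (auto simp: assms(4))
  have "Pi_pmf B d (F \<circ> g) = map_pmf (\<lambda>x. x \<circ> g) (Pi_pmf (g ` B) d F)"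
    by (rule Pi_pmf_reindex_image[OF assms(2,3), symmetric])
  also have "\<dots> = map_pmf (\<lambda>x. x \<circ> g) (map_pmf (\<lambda>f x. if x \<in> g ` B then f x else d) (Pi_pmf A d F))"
    by (subst Pi_pmf_subset[OF assms(1) sub]) (rule refl)
  also have "\<dots> = map_pmf (\<lambda>x. x \<circ> g) (Pi_pmf A d F)"
    unfolding pmf.map_comp
  proof (intro pmf.map_cong refl)
    fix x assume x: "x \<in> set_pmf (Pi_pmf A d F)"
    then have xd: "\<And>a. a \<notin> A \<Longrightarrow> x a = d" using set_Pi_pmf_subset[OF assms(1), of d F] by auto
    show "((\<lambda>x. x \<circ> g) \<circ> (\<lambda>f x. if x \<in> g ` B then f x else d)) x = x \<circ> g"
    proof (rule ext)
      fix b
      show "((\<lambda>x. x \<circ> g) \<circ> (\<lambda>f x. if x \<in> g ` B then f x else d)) x b = (x \<circ> g) b"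
      proof (cases "b \<in> B")
        case True then show ?thesis by simp
      next
        case False
        then have "g b \<notin> g ` B" using assms(3) by (simp add: inj_image_mem_iff)
        moreover have "g b \<notin> A" using False assms(4)[of b] by simp
        ultimately show ?thesis using xd by simp
      qed
    qed
  qed
  finally show ?thesis ..
qed

lemma Pi_pmf_curry:
  assumes "finite B1" "finite B2"
  shows "map_pmf (\<lambda>x k t. x (k, t)) (Pi_pmf (B1 \<times> B2) d F)
       = Pi_pmf B1 (\<lambda>_. d) (\<lambda>k. Pi_pmf B2 d (\<lambda>t. F (k, t)))"
proof (rule pmf_eqI)
  fix y :: "'a \<Rightarrow> 'b \<Rightarrow> 'c"
  have inj: "inj (\<lambda>x k t. x (k, t))"
    by (intro injI) (auto simp: fun_eq_iff)
  have y: "y = (\<lambda>k t. (case_prod y) (k, t))" by simp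
  have "pmf (map_pmf (\<lambda>x k t. x (k, t)) (Pi_pmf (B1 \<times> B2) d F)) y
      = pmf (Pi_pmf (B1 \<times> B2) d F) (case_prod y)"
    by (subst y, subst pmf_map_inj'[OF inj]) simp
  also have "\<dots> = pmf (Pi_pmf B1 (\<lambda>_. d) (\<lambda>k. Pi_pmf B2 d (\<lambda>t. F (k, t)))) y"
  proof (cases "\<forall>k t. (k, t) \<notin> B1 \<times> B2 \<longrightarrow> y k t = d")
    case True
    then have o1: "\<forall>k. k \<notin> B1 \<longrightarrow> y k = (\<lambda>_. d)" by auto
    have "pmf (Pi_pmf (B1 \<times> B2) d F) (case_prod y) = (\<Prod>p\<in>B1 \<times> B2. pmf (F p) (case_prod y p))"
      using True assms by (subst pmf_Pi) auto
    also have "\<dots> = (\<Prod>k\<in>B1. \<Prod>t\<in>B2. pmf (F (k, t)) (y k t))"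
      by (subst prod.cartesian_product) (simp add: case_prod_beta')
    also have "\<dots> = (\<Prod>k\<in>B1. pmf (Pi_pmf B2 d (\<lambda>t. F (k, t))) (y k))"
      using True assms by (intro prod.cong refl, subst pmf_Pi) auto
    also have "\<dots> = pmf (Pi_pmf B1 (\<lambda>_. d) (\<lambda>k. Pi_pmf B2 d (\<lambda>t. F (k, t)))) y"
      using o1 assms by (subst pmf_Pi) auto
    finally show ?thesis .
  next
    case False
    then obtain k t where kt: "(k, t) \<notin> B1 \<times> B2" "y k t \<noteq> d" by auto
    have l: "pmf (Pi_pmf (B1 \<times> B2) d F) (case_prod y) = 0"
      using kt assms by (intro pmf_Pi_outside) auto
    show ?thesis
    proof (cases "k \<in> B1")
      case True
      then have "t \<notin> B2" using kt by auto
      then have "pmf (Pi_pmf B2 d (\<lambda>t. F (k, t))) (y k) = 0"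
        using kt assms by (intro pmf_Pi_outside) auto
      then have "(\<Prod>k\<in>B1. pmf (Pi_pmf B2 d (\<lambda>t. F (k, t))) (y k)) = 0"
        using True assms by (intro prod_zero) auto
      then show ?thesis using l assms by (subst pmf_Pi) auto
    next
      case False
      then have "pmf (Pi_pmf B1 (\<lambda>_. d) (\<lambda>k. Pi_pmf B2 d (\<lambda>t. F (k, t)))) y = 0"
        using kt assms by (intro pmf_Pi_outside) (auto simp: fun_eq_iff)
      then show ?thesis using l by simp
    qed
  qed
  finally show "pmf (map_pmf (\<lambda>x k t. x (k, t)) (Pi_pmf (B1 \<times> B2) d F)) y = pmf (Pi_pmf B1 (\<lambda>_. d) (\<lambda>k. Pi_pmf B2 d (\<lambda>t. F (k, t)))) y" .
qed

lemma exp_le_quad: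
  fixes y :: real
  assumes "\<bar>y\<bar> \<le> 1"
  shows "exp y \<le> 1 + y + y\<^sup>2"
proof (cases "y \<ge> 0")
  case True
  then show ?thesis using exp_bound[of y] assms by simp
next
  case False
  define a where "a = - y"
  have a: "0 \<le> a" "a \<le> 1" using False assms by (auto simp: a_def)
  have e: "exp (-y) \<ge> (2 + 2*a + a\<^sup>2) / 2" using exp_lower_Taylor_quadratic[of a] a by (simp add: a_def)
  have pos: "2 + 2*a + a\<^sup>2 > 0" using a by (simp add: add_pos_nonneg)
  have eq: "(1 - a + a\<^sup>2) * (2 + 2*a + a\<^sup>2) = 2 + a\<^sup>2 + a^3 + a^4"
    by (simp add: power2_eq_square power3_eq_cube power4_eq_xxxx algebra_simps)
  have "a^3 \<ge> 0" "a^4 \<ge> 0" "a\<^sup>2 \<ge> 0" using a by auto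
  then have ge: "(1 - a + a\<^sup>2) * (2 + 2*a + a\<^sup>2) \<ge> 2" using eq by linarith
  have "2 / (2 + 2*a + a\<^sup>2) \<le> 1 - a + a\<^sup>2"
    using pos ge by (simp add: divide_le_eq)
  moreover have "exp y = 1 / exp (-y)" by (simp add: exp_minus inverse_eq_divide)
  moreover have "1 / exp (-y) \<le> 1 / ((2 + 2*a + a\<^sup>2) / 2)"
    using e pos by (intro divide_left_mono) auto
  ultimately show ?thesis by (simp add: a_def)
qed



lemma fin_int: "finite (set_pmf M) \<Longrightarrow> integrable (measure_pmf M) (f :: _ \<Rightarrow> real)"
  by (rule integrable_measure_pmf_finite)

lemma jensen_abs:
  fixes Z :: "'a \<Rightarrow> real"
  assumes fin: "finite (set_pmf M)"
  shows "measure_pmf.expectation M (\<lambda>x. \<bar>Z x\<bar>) \<le> sqrt (measure_pmf.expectation M (\<lambda>x. (Z x)\<^sup>2))"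
proof -
  define c where "c = measure_pmf.expectation M (\<lambda>x. \<bar>Z x\<bar>)"
  have c0: "c \<ge> 0" unfolding c_def by simp
  have "0 \<le> measure_pmf.expectation M (\<lambda>x. (\<bar>Z x\<bar> - c)\<^sup>2)" by simp
  also have "(\<lambda>x. (\<bar>Z x\<bar> - c)\<^sup>2) = (\<lambda>x. ((Z x)\<^sup>2 - 2 * c * \<bar>Z x\<bar>) + c\<^sup>2)"
    by (auto simp: power2_eq_square algebra_simps abs_mult_self_eq)
  also have "measure_pmf.expectation M \<dots> = measure_pmf.expectation M (\<lambda>x. (Z x)\<^sup>2) - 2 * c * c + c\<^sup>2"
    using fin by (simp add: fin_int c_def)
  finally have "c\<^sup>2 \<le> measure_pmf.expectation M (\<lambda>x. (Z x)\<^sup>2)"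
    by (simp add: power2_eq_square)
  then show ?thesis unfolding c_def[symmetric] using c0 real_le_rsqrt by blast
qed

lemma iid_comp:
  fixes k K :: nat
  assumes "k < K"
  shows "measure_pmf.expectation (Pi_pmf {..<K} d (\<lambda>_. \<nu>)) (\<lambda>x. f (x k)) = measure_pmf.expectation \<nu> (f :: _ \<Rightarrow> real)"
proof -
  have "map_pmf (\<lambda>x. x k) (Pi_pmf {..<K} d (\<lambda>_. \<nu>)) = \<nu>"
    using assms by (subst Pi_pmf_component) auto
  then show ?thesis by (metis integral_map_pmf)
qed

lemma iid_pair:
  fixes f g :: "'a \<Rightarrow> real" and k k' K :: nat
  assumes fin: "finite (set_pmf \<nu>)" and kk: "k < K" "k' < K" "k \<noteq> k'"
    and f: "\<And>a. f a \<ge> 0" and g: "\<And>a. g a \<ge> 0"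
  shows "measure_pmf.expectation (Pi_pmf {..<K} d (\<lambda>_. \<nu>)) (\<lambda>x. f (x k) * g (x k'))
       = measure_pmf.expectation \<nu> f * measure_pmf.expectation \<nu> g"
proof -
  define F where "F = (\<lambda>i. if i = k then f else g)"
  have sub: "{k, k'} \<subseteq> {..<K}" using kk by auto
  have "measure_pmf.expectation (Pi_pmf {k, k'} d (\<lambda>_. \<nu>)) (\<lambda>y. \<Prod>i\<in>{k,k'}. F i (y i))
      = (\<Prod>i\<in>{k,k'}. measure_pmf.expectation \<nu> (F i))"
    by (rule expectation_prod_Pi_pmf) (auto simp: fin_int fin F_def f g)
  also have "\<dots> = measure_pmf.expectation \<nu> f * measure_pmf.expectation \<nu> g"
    using kk by (simp add: F_def)
  also have "(\<lambda>y. \<Prod>i\<in>{k,k'}. F i (y i)) = (\<lambda>y. f (y k) * g (y k'))"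
    using kk by (auto simp: F_def)
  also have "measure_pmf.expectation (Pi_pmf {k, k'} d (\<lambda>_. \<nu>)) (\<lambda>y. f (y k) * g (y k'))
     = measure_pmf.expectation (Pi_pmf {..<K} d (\<lambda>_. \<nu>)) (\<lambda>x. f (x k) * g (x k'))"
    by (subst Pi_pmf_subset[OF _ sub]) auto
  finally show ?thesis by simp
qed

lemma soft_cover_iid:
  fixes \<nu> :: "'a pmf" and Y :: "'a \<Rightarrow> real" and T :: real and K :: nat
  assumes fin: "finite (set_pmf \<nu>)" and K: "K > 0" and Y: "\<And>a. Y a \<ge> 0" and T: "T > 0"
  shows "measure_pmf.expectation (Pi_pmf {..<K} d (\<lambda>_. \<nu>))
           (\<lambda>x. \<bar>(\<Sum>k<K. Y (x k)) / K - measure_pmf.expectation \<nu> Y\<bar>)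
         \<le> measure_pmf.expectation \<nu> Y * sqrt (T / K)
            + 2 * measure_pmf.expectation \<nu> (\<lambda>a. if Y a > T * measure_pmf.expectation \<nu> Y then Y a else 0)"
proof -
  define q where "q = measure_pmf.expectation \<nu> Y"
  define R where "R = Pi_pmf {..<K} d (\<lambda>_. \<nu>)"
  have finR: "finite (set_pmf R)" unfolding R_def by (rule finite_set_Pi_pmf) (auto simp: fin)
  define G where "G = (\<lambda>a. if Y a > T * q then 0 else Y a)"
  define H where "H = (\<lambda>a. if Y a > T * q then Y a else 0)"
  have YGH: "\<And>a. Y a = G a + H a" by (simp add: G_def H_def)
  have G0: "\<And>a. G a \<ge> 0" and H0: "\<And>a. H a \<ge> 0" by (auto simp: G_def H_def Y)
  have q0: "q \<ge> 0" unfolding q_def by (auto intro!: integral_nonneg simp: Y)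
  have GT: "\<And>a. G a \<le> T * q" using q0 T by (auto simp: G_def)
  define m where "m = measure_pmf.expectation \<nu> G"
  define h where "h = measure_pmf.expectation \<nu> H"
  have qmh: "q = m + h"
  proof -
    have "Y = (\<lambda>a. G a + H a)" by (rule ext) (rule YGH)
    then show ?thesis unfolding q_def m_def h_def by (simp add: fin_int fin)
  qed
  have m0: "m \<ge> 0" and h0: "h \<ge> 0" unfolding m_def h_def by (auto intro!: integral_nonneg simp: G0 H0)
  define SG where "SG = (\<lambda>x. \<Sum>k<K. G (x k))"
  define SH where "SH = (\<lambda>x. \<Sum>k<K. H (x k))"
  have K0: "real K > 0" using K by simp
  have pw: "\<bar>(\<Sum>k<K. Y (x k)) / K - q\<bar> \<le> \<bar>SG x / K - m\<bar> + SH x / K + h" for x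
  proof -
    have "(\<Sum>k<K. Y (x k)) = SG x + SH x" by (simp add: SG_def SH_def YGH sum.distrib)
    then have e: "(\<Sum>k<K. Y (x k)) / K - q = (SG x / K - m) + (SH x / K - h)"
      using qmh by (simp add: add_divide_distrib)
    have "SH x \<ge> 0" unfolding SH_def by (intro sum_nonneg) (simp add: H0)
    then have "SH x / K \<ge> 0" by simp
    then have "\<bar>SH x / K - h\<bar> \<le> SH x / K + h" using h0 by linarith
    then show ?thesis unfolding e by linarith
  qed
  have ESH: "measure_pmf.expectation R (\<lambda>x. SH x / K) = h"
  proof -
    have "measure_pmf.expectation R SH = (\<Sum>k<K. measure_pmf.expectation R (\<lambda>x. H (x k)))"
      unfolding SH_def by (simp add: fin_int finR)
    also have "\<dots> = (\<Sum>k<K. h)" unfolding R_def h_def by (intro sum.cong refl iid_comp) auto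
    finally show ?thesis using K0 by simp
  qed
  define EG2 where "EG2 = measure_pmf.expectation \<nu> (\<lambda>a. (G a)\<^sup>2)"
  have pair: "measure_pmf.expectation R (\<lambda>x. G (x k) * G (x k')) = m\<^sup>2 + (if k = k' then EG2 - m\<^sup>2 else 0)"
    if "k < K" "k' < K" for k k'
  proof (cases "k = k'")
    case True
    have "measure_pmf.expectation R (\<lambda>x. G (x k) * G (x k')) = measure_pmf.expectation \<nu> (\<lambda>a. G a * G a)"
      using True that iid_comp[of k K d \<nu> "\<lambda>a. G a * G a"] by (simp add: R_def)
    then show ?thesis using True by (simp add: EG2_def power2_eq_square)
  next
    case False
    then show ?thesis unfolding R_def m_def using that
      by (simp add: power2_eq_square iid_pair fin G0)
  qed
  have ESG2: "measure_pmf.expectation R (\<lambda>x. (SG x)\<^sup>2) = K^2 * m\<^sup>2 + K * (EG2 - m\<^sup>2)"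
  proof -
    have "(\<lambda>x. (SG x)\<^sup>2) = (\<lambda>x. \<Sum>k<K. \<Sum>k'<K. G (x k) * G (x k'))"
      by (simp add: SG_def power2_eq_square sum_product)
    then have "measure_pmf.expectation R (\<lambda>x. (SG x)\<^sup>2)
        = (\<Sum>k<K. \<Sum>k'<K. measure_pmf.expectation R (\<lambda>x. G (x k) * G (x k')))"
      by (simp add: integral_sum fin_int finR)
    also have "\<dots> = (\<Sum>k<K. \<Sum>k'<K. m\<^sup>2 + (if k = k' then EG2 - m\<^sup>2 else 0))"
      by (intro sum.cong refl pair) auto
    also have "\<dots> = K^2 * m\<^sup>2 + K * (EG2 - m\<^sup>2)"
      by (simp add: sum.distrib power2_eq_square algebra_simps)
    finally show ?thesis .
  qed
  have ESG: "measure_pmf.expectation R SG = K * m"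
  proof -
    have "measure_pmf.expectation R SG = (\<Sum>k<K. measure_pmf.expectation R (\<lambda>x. G (x k)))"
      unfolding SG_def by (simp add: fin_int finR)
    also have "\<dots> = (\<Sum>k<K. m)" unfolding R_def m_def by (intro sum.cong refl iid_comp) auto
    finally show ?thesis by simp
  qed
  have EG2b: "EG2 \<le> T * q * m"
  proof -
    have "EG2 \<le> measure_pmf.expectation \<nu> (\<lambda>a. T * q * G a)"
      unfolding EG2_def
    proof (rule integral_mono)
      fix a show "(G a)\<^sup>2 \<le> T * q * G a"
        using GT[of a] G0[of a] by (simp add: power2_eq_square mult_right_mono)
    qed (auto simp: fin_int fin)
    then show ?thesis by (simp add: m_def)
  qed
  have var: "measure_pmf.expectation R (\<lambda>x. (SG x / K - m)\<^sup>2) \<le> T * q\<^sup>2 / K"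
  proof -
    have e1: "(SG x / K - m)\<^sup>2 = ((SG x)\<^sup>2 - 2 * (K * m) * SG x + (K * m)\<^sup>2) / (K^2)" for x
    proof -
      have "SG x / K - m = (SG x - K * m) / K" using K0 by (simp add: diff_divide_distrib)
      then have "(SG x / K - m)\<^sup>2 = (SG x - K * m)\<^sup>2 / K^2" by (simp add: power_divide)
      also have "(SG x - K * m)\<^sup>2 = (SG x)\<^sup>2 - 2 * (K * m) * SG x + (K * m)\<^sup>2"
        by (simp add: power2_diff algebra_simps)
      finally show ?thesis .
    qed
    have "measure_pmf.expectation R (\<lambda>x. (SG x / K - m)\<^sup>2)
        = measure_pmf.expectation R (\<lambda>x. ((SG x)\<^sup>2 - 2 * (K * m) * SG x + (K * m)\<^sup>2) / (K^2))"
      by (simp only: e1)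
    also have "\<dots> = (measure_pmf.expectation R (\<lambda>x. (SG x)\<^sup>2) - 2 * (K * m) * measure_pmf.expectation R SG + (K * m)\<^sup>2) / K^2"
      by (simp add: fin_int finR)
    also have "\<dots> = (K * (EG2 - m\<^sup>2)) / K^2"
    proof -
      have "K^2 * m\<^sup>2 + K * (EG2 - m\<^sup>2) - 2 * (K * m) * (K * m) + (K * m)\<^sup>2 = K * (EG2 - m\<^sup>2)"
        by (simp add: power2_eq_square algebra_simps)
      then show ?thesis unfolding ESG2 ESG by simp
    qed
    also have "\<dots> = (EG2 - m\<^sup>2) / K" using K0 by (simp add: power2_eq_square)
    also have "\<dots> \<le> EG2 / K" using K0 by (simp add: divide_right_mono)
    also have "\<dots> \<le> T * q * m / K" using EG2b K0 by (simp add: divide_right_mono)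
    also have "\<dots> \<le> T * q * q / K" using K0 T q0 m0 qmh h0
      by (intro divide_right_mono mult_left_mono) auto
    finally show ?thesis by (simp add: power2_eq_square)
  qed
  have "measure_pmf.expectation R (\<lambda>x. \<bar>SG x / K - m\<bar>) \<le> sqrt (measure_pmf.expectation R (\<lambda>x. (SG x / K - m)\<^sup>2))"
    by (rule jensen_abs[OF finR])
  also have "\<dots> \<le> sqrt (T * q\<^sup>2 / K)" using var by simp
  also have "\<dots> = q * sqrt (T / K)" using q0 by (simp add: real_sqrt_mult real_sqrt_divide)
  finally have J: "measure_pmf.expectation R (\<lambda>x. \<bar>SG x / K - m\<bar>) \<le> q * sqrt (T / K)" .
  have "measure_pmf.expectation R (\<lambda>x. \<bar>(\<Sum>k<K. Y (x k)) / K - q\<bar>)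
      \<le> measure_pmf.expectation R (\<lambda>x. \<bar>SG x / K - m\<bar> + SH x / K + h)"
    by (rule integral_mono) (auto simp: fin_int finR pw)
  also have "\<dots> = measure_pmf.expectation R (\<lambda>x. \<bar>SG x / K - m\<bar>) + h + h"
    using ESH by (simp add: fin_int finR)
  also have "\<dots> \<le> q * sqrt (T / K) + 2 * h" using J by simp
  finally show ?thesis unfolding R_def q_def h_def H_def by simp
qed



lemma Hbound:
  fixes \<nu> :: "'a pmf" and Y :: "'a \<Rightarrow> real"
  assumes fin: "finite (set_pmf \<nu>)" and Y: "\<And>a. Y a \<ge> 0" and T: "T > 0" and s: "s \<ge> 0"
  shows "measure_pmf.expectation \<nu> (\<lambda>a. if Y a > T * measure_pmf.expectation \<nu> Y then Y a else 0)
       \<le> T powr (-s) * (measure_pmf.expectation \<nu> Y) powr (-s) * measure_pmf.expectation \<nu> (\<lambda>a. Y a powr (1 + s))"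
proof -
  define q where "q = measure_pmf.expectation \<nu> Y"
  have q0: "q \<ge> 0" unfolding q_def by (auto intro!: integral_nonneg simp: Y)
  show ?thesis
  proof (cases "q = 0")
    case True
    have "measure_pmf.expectation \<nu> (\<lambda>a. if Y a > T * q then Y a else 0) \<le> measure_pmf.expectation \<nu> Y"
      by (rule integral_mono) (auto simp: fin_int fin Y)
    then show ?thesis using True unfolding q_def[symmetric] by simp
  next
    case False
    then have qp: "q > 0" using q0 by simp
    have "measure_pmf.expectation \<nu> (\<lambda>a. if Y a > T * q then Y a else 0)
        \<le> measure_pmf.expectation \<nu> (\<lambda>a. (T * q) powr (-s) * Y a powr (1 + s))"
    proof (rule integral_mono)
      fix a
      show "(if Y a > T * q then Y a else 0) \<le> (T * q) powr (-s) * Y a powr (1 + s)"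
      proof (cases "Y a > T * q")
        case True
        have Tq: "T * q > 0" using T qp by simp
        have "(T * q) powr s \<le> Y a powr s" using True Tq s by (intro powr_mono2) auto
        moreover have "(T * q) powr s > 0" using T qp by auto
        ultimately have "1 \<le> Y a powr s / (T * q) powr s" by (subst le_divide_eq_1_pos) auto
        then have "1 \<le> (T * q) powr (-s) * Y a powr s"
          by (simp add: powr_minus divide_inverse mult.commute)
        then have "Y a * 1 \<le> Y a * ((T * q) powr (-s) * Y a powr s)" using Y[of a] by (intro mult_left_mono) auto
        also have "\<dots> = (T * q) powr (-s) * Y a powr (1 + s)"
          using Y[of a] by (simp add: powr_mult_base[symmetric])
        finally show ?thesis using True by simp
      qed simp
    qed (auto simp: fin_int fin)
    also have "\<dots> = T powr (-s) * q powr (-s) * measure_pmf.expectation \<nu> (\<lambda>a. Y a powr (1 + s))"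
      by (simp add: powr_mult)
    finally show ?thesis unfolding q_def .
  qed
qed

lemma sum_PiE_prod:
  fixes c :: "nat \<Rightarrow> 'z::finite \<Rightarrow> real"
  shows "(\<Sum>zs\<in>PiE {..<n} (\<lambda>_. UNIV). \<Prod>t<n. c t (zs t)) = (\<Prod>t<n. \<Sum>z\<in>UNIV. c t z)"
  by (subst prod_sum_PiE) auto

lemma pmf_Pi_in:
  fixes n :: nat
  assumes "zs \<in> PiE {..<n} (\<lambda>_. UNIV)"
  shows "pmf (Pi_pmf {..<n} undefined F) zs = (\<Prod>t<n. pmf (F t) (zs t))"
  using assms by (subst pmf_Pi') (auto simp: PiE_def extensional_def)

lemma pmf_Pi_notin:
  fixes n :: nat
  assumes "zs \<notin> PiE {..<n} (\<lambda>_. UNIV)"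
  shows "pmf (Pi_pmf {..<n} undefined F) zs = 0"
  using assms by (intro pmf_Pi_outside) (auto simp: PiE_def extensional_def)

lemma soft_cover_rows:
  fixes \<mu> :: "nat \<Rightarrow> 'x::finite pmf" and V :: "'x \<Rightarrow> 'z::finite pmf" and K n :: nat and T s :: real
  assumes K: "K > 0" and T: "T > 0" and s: "s \<ge> 0"
  shows "measure_pmf.expectation (Pi_pmf {..<K} dd (\<lambda>_. Pi_pmf {..<n} undefined \<mu>))
           (\<lambda>x. \<Sum>zs\<in>PiE {..<n} (\<lambda>_. UNIV).
                \<bar>(\<Sum>k<K. pmf (Pi_pmf {..<n} undefined (\<lambda>t. V (x k t))) zs) / K
                 - pmf (Pi_pmf {..<n} undefined (\<lambda>t. bind_pmf (\<mu> t) V)) zs\<bar>)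
         \<le> sqrt (T / K) + 2 * T powr (-s) *
             (\<Prod>t<n. \<Sum>z\<in>UNIV. pmf (bind_pmf (\<mu> t) V) z powr (-s)
                        * measure_pmf.expectation (\<mu> t) (\<lambda>x. pmf (V x) z powr (1 + s)))"
proof -
  define \<Omega> where "\<Omega> = PiE {..<n} (\<lambda>_. UNIV :: 'z set)"
  have finO: "finite \<Omega>" unfolding \<Omega>_def by (simp add: finite_PiE)
  define \<nu> where "\<nu> = Pi_pmf {..<n} undefined \<mu>"
  define R where "R = Pi_pmf {..<K} dd (\<lambda>_. \<nu>)"
  have finnu: "finite (set_pmf \<nu>)" unfolding \<nu>_def by (rule finite_set_Pi_pmf) auto
  have finR: "finite (set_pmf R)" unfolding R_def by (rule finite_set_Pi_pmf) (auto simp: finnu)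
  define Y where "Y = (\<lambda>zs (v :: nat \<Rightarrow> 'x). \<Prod>t<n. pmf (V (v t)) (zs t))"
  define Qz where "Qz = (\<lambda>t. bind_pmf (\<mu> t) V)"
  define qz where "qz = (\<lambda>zs. \<Prod>t<n. pmf (Qz t) (zs t))"
  define c where "c = (\<lambda>t z. pmf (Qz t) z powr (-s) * measure_pmf.expectation (\<mu> t) (\<lambda>x. pmf (V x) z powr (1 + s)))"
  have Y0: "\<And>zs v. Y zs v \<ge> 0" unfolding Y_def by (simp add: prod_nonneg)
  have EY: "measure_pmf.expectation \<nu> (Y zs) = qz zs" for zs
  proof -
    have "measure_pmf.expectation \<nu> (Y zs) = (\<Prod>t<n. measure_pmf.expectation (\<mu> t) (\<lambda>x. pmf (V x) (zs t)))"
      unfolding \<nu>_def Y_def by (rule expectation_prod_Pi_pmf) (auto simp: fin_int)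
    also have "\<dots> = qz zs" unfolding qz_def Qz_def by (simp add: pmf_bind)
    finally show ?thesis .
  qed
  have sumq: "(\<Sum>zs\<in>\<Omega>. qz zs) = 1"
  proof -
    have "(\<Sum>zs\<in>\<Omega>. qz zs) = (\<Prod>t<n. \<Sum>z\<in>UNIV. pmf (Qz t) z)"
      unfolding \<Omega>_def qz_def by (rule sum_PiE_prod)
    also have "\<dots> = 1" by (simp add: sum_pmf_eq_1)
    finally show ?thesis .
  qed
  have termb: "measure_pmf.expectation R
        (\<lambda>x. \<bar>(\<Sum>k<K. pmf (Pi_pmf {..<n} undefined (\<lambda>t. V (x k t))) zs) / K - pmf (Pi_pmf {..<n} undefined Qz) zs\<bar>)
      \<le> qz zs * sqrt (T / K) + 2 * (T powr (-s) * (\<Prod>t<n. c t (zs t)))"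
    if zs: "zs \<in> \<Omega>" for zs
  proof -
    have e1: "\<And>x. (\<Sum>k<K. pmf (Pi_pmf {..<n} undefined (\<lambda>t. V (x k t))) zs) = (\<Sum>k<K. Y zs (x k))"
      using zs unfolding \<Omega>_def Y_def by (simp add: pmf_Pi_in)
    have e2: "pmf (Pi_pmf {..<n} undefined Qz) zs = measure_pmf.expectation \<nu> (Y zs)"
      using zs unfolding \<Omega>_def EY qz_def by (simp add: pmf_Pi_in)
    have "measure_pmf.expectation R
        (\<lambda>x. \<bar>(\<Sum>k<K. pmf (Pi_pmf {..<n} undefined (\<lambda>t. V (x k t))) zs) / K - pmf (Pi_pmf {..<n} undefined Qz) zs\<bar>)
      = measure_pmf.expectation R (\<lambda>x. \<bar>(\<Sum>k<K. Y zs (x k)) / K - measure_pmf.expectation \<nu> (Y zs)\<bar>)"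
      by (simp only: e1 e2)
    also have "\<dots> \<le> measure_pmf.expectation \<nu> (Y zs) * sqrt (T / K)
            + 2 * measure_pmf.expectation \<nu> (\<lambda>a. if Y zs a > T * measure_pmf.expectation \<nu> (Y zs) then Y zs a else 0)"
      unfolding R_def by (rule soft_cover_iid[OF finnu K Y0[of zs] T])
    also have "\<dots> \<le> measure_pmf.expectation \<nu> (Y zs) * sqrt (T / K)
            + 2 * (T powr (-s) * ((measure_pmf.expectation \<nu> (Y zs)) powr (-s) * measure_pmf.expectation \<nu> (\<lambda>a. Y zs a powr (1 + s))))"
      using Hbound[OF finnu Y0[of zs] T s] by (simp add: mult.assoc)
    also have "(measure_pmf.expectation \<nu> (Y zs)) powr (-s) * measure_pmf.expectation \<nu> (\<lambda>a. Y zs a powr (1 + s))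
        = (\<Prod>t<n. c t (zs t))"
    proof -
      have "measure_pmf.expectation \<nu> (\<lambda>a. Y zs a powr (1 + s))
          = measure_pmf.expectation \<nu> (\<lambda>a. \<Prod>t<n. pmf (V (a t)) (zs t) powr (1 + s))"
        unfolding Y_def by (simp add: prod_powr_distrib)
      also have "\<dots> = (\<Prod>t<n. measure_pmf.expectation (\<mu> t) (\<lambda>x. pmf (V x) (zs t) powr (1 + s)))"
        unfolding \<nu>_def by (rule expectation_prod_Pi_pmf) (auto simp: fin_int)
      finally have a: "measure_pmf.expectation \<nu> (\<lambda>a. Y zs a powr (1 + s)) = \<dots>" .
      have b: "(measure_pmf.expectation \<nu> (Y zs)) powr (-s) = (\<Prod>t<n. pmf (Qz t) (zs t) powr (-s))"
        unfolding EY qz_def by (simp add: prod_powr_distrib)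
      show ?thesis unfolding a b c_def by (simp add: prod.distrib)
    qed
    finally show ?thesis using EY by (simp add: mult.assoc)
  qed
  have "measure_pmf.expectation R
        (\<lambda>x. \<Sum>zs\<in>\<Omega>. \<bar>(\<Sum>k<K. pmf (Pi_pmf {..<n} undefined (\<lambda>t. V (x k t))) zs) / K - pmf (Pi_pmf {..<n} undefined Qz) zs\<bar>)
      = (\<Sum>zs\<in>\<Omega>. measure_pmf.expectation R
        (\<lambda>x. \<bar>(\<Sum>k<K. pmf (Pi_pmf {..<n} undefined (\<lambda>t. V (x k t))) zs) / K - pmf (Pi_pmf {..<n} undefined Qz) zs\<bar>))"
    by (simp add: fin_int finR)
  also have "\<dots> \<le> (\<Sum>zs\<in>\<Omega>. qz zs * sqrt (T / K) + 2 * (T powr (-s) * (\<Prod>t<n. c t (zs t))))"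
    by (rule sum_mono) (rule termb)
  also have "\<dots> = sqrt (T / K) + 2 * (T powr (-s) * (\<Prod>t<n. \<Sum>z\<in>UNIV. c t z))"
    unfolding sum.distrib sum_distrib_left[symmetric] sum_distrib_right[symmetric] sumq
    unfolding \<Omega>_def by (simp add: sum_PiE_prod)
  finally show ?thesis unfolding R_def \<nu>_def Qz_def c_def \<Omega>_def by (simp add: mult.assoc)
qed



lemma exponent_bound:
  fixes S :: "'a set" and w r :: "'a \<Rightarrow> real" and \<delta> :: real
  assumes fin: "finite S" and w: "\<And>t. t \<in> S \<Longrightarrow> w t > 0" and r: "\<And>t. t \<in> S \<Longrightarrow> r t > 0"
    and sw: "(\<Sum>t\<in>S. w t) = 1" and d: "\<delta> > 0"
  shows "\<exists>s>0. s \<le> 1 \<and> (\<Sum>t\<in>S. w t * r t powr s) \<le> 2 powr (s * ((\<Sum>t\<in>S. w t * log 2 (r t)) + \<delta>))"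
proof -
  define I where "I = (\<Sum>t\<in>S. w t * log 2 (r t))"
  define L where "L = (\<Sum>t\<in>S. \<bar>log 2 (r t)\<bar>)"
  have L0: "L \<ge> 0" unfolding L_def by (simp add: sum_nonneg)
  have lL: "\<And>t. t \<in> S \<Longrightarrow> \<bar>log 2 (r t)\<bar> \<le> L"
    unfolding L_def using fin by (intro member_le_sum) auto
  define l2 where "l2 = ln (2::real)"
  have l2: "l2 > 0" unfolding l2_def by simp
  define a where "a = l2 * (L + 1)"
  have a: "a > 0" unfolding a_def using l2 L0 by (simp add: add_nonneg_pos)
  define s where "s = min (min 1 (1 / a)) (\<delta> * l2 / a\<^sup>2)"
  have s0: "s > 0" unfolding s_def using a d l2 by simp
  have s1: "s \<le> 1" and sa: "s \<le> 1 / a" and sd: "s \<le> \<delta> * l2 / a\<^sup>2" unfolding s_def by auto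
  have pt: "r t powr s \<le> 1 + s * l2 * log 2 (r t) + s\<^sup>2 * a\<^sup>2" if t: "t \<in> S" for t
  proof -
    define y where "y = s * l2 * log 2 (r t)"
    have rpow: "r t powr s = exp y"
      using r[OF t] l2 unfolding y_def l2_def by (simp add: powr_def log_def)
    have "\<bar>y\<bar> = s * l2 * \<bar>log 2 (r t)\<bar>" unfolding y_def using s0 l2 by (simp add: abs_mult)
    also have "\<dots> \<le> s * l2 * L" using lL[OF t] s0 l2 by (simp add: mult_left_mono)
    also have "\<dots> \<le> s * a" unfolding a_def using s0 l2 by (simp add: mult_left_mono algebra_simps)
    finally have ya: "\<bar>y\<bar> \<le> s * a" .
    also have "s * a \<le> 1" using sa a by (simp add: field_simps)
    finally have y1: "\<bar>y\<bar> \<le> 1" .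
    have "y\<^sup>2 \<le> (s * a)\<^sup>2" using ya by (metis abs_ge_zero power2_abs power_mono)
    then show ?thesis using exp_le_quad[OF y1] rpow unfolding y_def by (simp add: power_mult_distrib)
  qed
  have "(\<Sum>t\<in>S. w t * r t powr s) \<le> (\<Sum>t\<in>S. w t * (1 + s * l2 * log 2 (r t) + s\<^sup>2 * a\<^sup>2))"
    using w pt by (intro sum_mono mult_left_mono) (auto simp: less_imp_le)
  also have "\<dots> = 1 + s * l2 * I + s\<^sup>2 * a\<^sup>2"
    unfolding I_def using sw
    by (simp add: algebra_simps sum.distrib sum_distrib_left sum_distrib_right[symmetric])
  also have "\<dots> \<le> exp (s * l2 * I + s\<^sup>2 * a\<^sup>2)"
    using exp_ge_add_one_self[of "s * l2 * I + s\<^sup>2 * a\<^sup>2"] by (simp add: add.assoc)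
  also have "\<dots> \<le> exp (s * l2 * (I + \<delta>))"
  proof -
    have "s * (a\<^sup>2) \<le> \<delta> * l2" using sd a by (simp add: field_simps)
    then have "s\<^sup>2 * a\<^sup>2 \<le> s * (\<delta> * l2)" using s0 by (simp add: power2_eq_square mult.assoc mult_left_mono)
    then show ?thesis by (simp add: algebra_simps)
  qed
  also have "\<dots> = 2 powr (s * (I + \<delta>))"
    unfolding l2_def by (simp add: powr_def mult_ac)
  finally show ?thesis using s0 s1 unfolding I_def by blast
qed



definition ZW :: "('x \<Rightarrow> ('y \<times> 'z) pmf) \<Rightarrow> 'x \<Rightarrow> 'z pmf" where
  "ZW W x = map_pmf snd (W x)"

definition QZ :: "('u \<times> 'x) pmf \<Rightarrow> ('x \<Rightarrow> ('y \<times> 'z) pmf) \<Rightarrow> 'u \<Rightarrow> 'z pmf" where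
  "QZ pUX W u = bind_pmf (cond_X_given_U pUX u) (ZW W)"

lemma expect_finite:
  fixes M :: "'a::finite pmf" and f :: "'a \<Rightarrow> real"
  shows "measure_pmf.expectation M f = (\<Sum>a\<in>UNIV. pmf M a * f a)"
  by (subst integral_measure_pmf_real[of UNIV]) (auto simp: mult.commute)

lemma pmf_pU:
  fixes pUX :: "('u::finite \<times> 'x::finite) pmf"
  shows "pmf (map_pmf fst pUX) u = (\<Sum>x\<in>UNIV. pmf pUX (u, x))"
proof -
  have e: "fst -` {u} = Pair u ` UNIV" by auto
  have "pmf (map_pmf fst pUX) u = sum (pmf pUX) (Pair u ` UNIV)"
    by (simp add: pmf_map measure_measure_pmf_finite e)
  also have "\<dots> = (\<Sum>x\<in>UNIV. pmf pUX (u, x))"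
    by (subst sum.reindex) (auto simp: inj_on_def)
  finally show ?thesis .
qed

lemma pUX_le_pU:
  fixes pUX :: "('u::finite \<times> 'x::finite) pmf"
  shows "pmf pUX (u, x) \<le> pmf (map_pmf fst pUX) u"
  unfolding pmf_pU by (rule member_le_sum) auto

lemma pmf_cond_X:
  fixes pUX :: "('u::finite \<times> 'x::finite) pmf"
  assumes pos: "pmf (map_pmf fst pUX) u > 0"
  shows "pmf (cond_X_given_U pUX u) x = pmf pUX (u, x) / pmf (map_pmf fst pUX) u"
proof -
  define A where "A = {p :: 'u \<times> 'x. fst p = u}"
  have ne: "set_pmf pUX \<inter> A \<noteq> {}"
  proof -
    have "pmf (map_pmf fst pUX) u \<noteq> 0" using pos by simp
    then have "u \<in> set_pmf (map_pmf fst pUX)" by (metis set_pmf_iff)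
    then show ?thesis unfolding A_def by auto
  qed
  have mA: "measure (measure_pmf pUX) A = pmf (map_pmf fst pUX) u"
    unfolding A_def by (simp add: pmf_map vimage_def)
  have "pmf (cond_X_given_U pUX u) x = measure (measure_pmf (cond_pmf pUX A)) (snd -` {x})"
    unfolding cond_X_given_U_def A_def by (simp add: pmf_map)
  also have "\<dots> = (\<Sum>p\<in>snd -` {x}. pmf (cond_pmf pUX A) p)"
    by (simp add: measure_measure_pmf_finite)
  also have "\<dots> = (\<Sum>p\<in>snd -` {x}. if p \<in> A then pmf pUX p / measure (measure_pmf pUX) A else 0)"
    by (simp add: pmf_cond[OF ne])
  also have "\<dots> = (\<Sum>p\<in>{p\<in>snd -` {x}. p \<in> A}. pmf pUX p / measure (measure_pmf pUX) A)"
    by (subst sum.inter_filter) auto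
  also have "{p\<in>snd -` {x}. p \<in> A} = {(u, x)}" unfolding A_def by auto
  finally show ?thesis using mA by simp
qed

lemma pmf_UXZ:
  fixes pUX :: "('u::finite \<times> 'x::finite) pmf" and W :: "'x \<Rightarrow> ('y::finite \<times> 'z::finite) pmf"
  shows "pmf (UXZ_pmf pUX W) (u, x, z) = pmf pUX (u, x) * pmf (ZW W x) z"
proof -
  have inner: "bind_pmf (W x') (\<lambda>(y, z). return_pmf (u', x', z)) = map_pmf (\<lambda>z. (u', x', z)) (ZW W x')" for u' x'
    unfolding ZW_def map_pmf_def by (simp add: bind_assoc_pmf bind_return_pmf case_prod_beta')
  have U: "UXZ_pmf pUX W = bind_pmf pUX (\<lambda>p. map_pmf (\<lambda>z. (fst p, snd p, z)) (ZW W (snd p)))"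
    unfolding UXZ_pmf_def by (intro bind_pmf_cong refl) (auto simp: inner)
  have m: "pmf (map_pmf (\<lambda>z. (fst p, snd p, z)) (ZW W (snd p))) (u, x, z)
         = (if p = (u, x) then pmf (ZW W x) z else 0)" for p
  proof (cases "p = (u, x)")
    case True
    have "inj (\<lambda>z. (u, x, z))" by (auto simp: inj_on_def)
    then show ?thesis using True pmf_map_inj'[OF \<open>inj (\<lambda>z. (u, x, z))\<close>, of "ZW W x" z] by simp
  next
    case False
    have "(\<lambda>z. (fst p, snd p, z)) -` {(u, x, z)} = {}" using False by (cases p) auto
    then show ?thesis using False by (simp add: pmf_map)
  qed
  show ?thesis unfolding U pmf_bind m expect_finite
    by (simp add: if_distrib cong: if_cong)
qed

lemma pmf_QZ:
  fixes pUX :: "('u::finite \<times> 'x::finite) pmf" and W :: "'x \<Rightarrow> ('y::finite \<times> 'z::finite) pmf"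
  shows "pmf (QZ pUX W u) z = (\<Sum>x\<in>UNIV. pmf (cond_X_given_U pUX u) x * pmf (ZW W x) z)"
  unfolding QZ_def pmf_bind expect_finite ..

lemma pU_cond:
  fixes pUX :: "('u::finite \<times> 'x::finite) pmf"
  assumes "pmf (map_pmf fst pUX) u > 0"
  shows "pmf (map_pmf fst pUX) u * pmf (cond_X_given_U pUX u) x = pmf pUX (u, x)"
  using assms by (simp add: pmf_cond_X)

lemma QZ_pos:
  fixes pUX :: "('u::finite \<times> 'x::finite) pmf" and W :: "'x \<Rightarrow> ('y::finite \<times> 'z::finite) pmf"
  assumes a: "pmf pUX (u, x) > 0" and b: "pmf (ZW W x) z > 0"
  shows "pmf (QZ pUX W u) z > 0"
proof -
  have pu: "pmf (map_pmf fst pUX) u > 0" using a pUX_le_pU[of pUX u x] by linarith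
  have c: "pmf (cond_X_given_U pUX u) x > 0" using a pu by (simp add: pmf_cond_X)
  have "pmf (cond_X_given_U pUX u) x * pmf (ZW W x) z \<le> (\<Sum>x\<in>UNIV. pmf (cond_X_given_U pUX u) x * pmf (ZW W x) z)"
    by (rule member_le_sum) auto
  moreover have "pmf (cond_X_given_U pUX u) x * pmf (ZW W x) z > 0" using b c by simp
  ultimately show ?thesis unfolding pmf_QZ by linarith
qed

definition wt :: "('u \<times> 'x) pmf \<Rightarrow> ('x \<Rightarrow> ('y \<times> 'z) pmf) \<Rightarrow> 'u \<times> 'x \<times> 'z \<Rightarrow> real" where
  "wt pUX W t = (case t of (u, x, z) \<Rightarrow> pmf pUX (u, x) * pmf (ZW W x) z)"

definition rt :: "('u \<times> 'x) pmf \<Rightarrow> ('x \<Rightarrow> ('y \<times> 'z) pmf) \<Rightarrow> 'u \<times> 'x \<times> 'z \<Rightarrow> real" where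
  "rt pUX W t = (case t of (u, x, z) \<Rightarrow> pmf (ZW W x) z / pmf (QZ pUX W u) z)"

lemma sum_UNIV3:
  fixes f :: "'u::finite \<times> 'x::finite \<times> 'z::finite \<Rightarrow> real"
  shows "(\<Sum>t\<in>UNIV. f t) = (\<Sum>u\<in>UNIV. \<Sum>x\<in>UNIV. \<Sum>z\<in>UNIV. f (u, x, z))"
proof -
  have "(\<Sum>t\<in>UNIV. f t) = (\<Sum>t\<in>UNIV \<times> (UNIV \<times> UNIV). f t)" by simp
  also have "\<dots> = (\<Sum>u\<in>UNIV. \<Sum>p\<in>UNIV \<times> UNIV. f (u, p))" by (rule sum.cartesian_product')
  also have "\<dots> = (\<Sum>u\<in>UNIV. \<Sum>x\<in>UNIV. \<Sum>z\<in>UNIV. f (u, x, z))"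
    by (intro sum.cong refl, subst sum.cartesian_product') simp
  finally show ?thesis .
qed

lemma phi_eq:
  fixes pUX :: "('u::finite \<times> 'x::finite) pmf" and W :: "'x \<Rightarrow> ('y::finite \<times> 'z::finite) pmf"
  shows "measure_pmf.expectation (map_pmf fst pUX)
      (\<lambda>u. \<Sum>z\<in>UNIV. pmf (QZ pUX W u) z powr (-s)
            * measure_pmf.expectation (cond_X_given_U pUX u) (\<lambda>x. pmf (ZW W x) z powr (1 + s)))
    = (\<Sum>t\<in>{t. wt pUX W t > 0}. wt pUX W t * rt pUX W t powr s)"
proof -
  define F where "F = (\<lambda>t. if t \<in> {t. wt pUX W t > 0} then wt pUX W t * rt pUX W t powr s else 0)"
  have key: "pmf (map_pmf fst pUX) u * (pmf (QZ pUX W u) z powr (-s) * (pmf (cond_X_given_U pUX u) x * pmf (ZW W x) z powr (1 + s)))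
      = F (u, x, z)" for u x z
  proof (cases "pmf (map_pmf fst pUX) u > 0")
    case False
    then have "pmf (map_pmf fst pUX) u = 0" by (simp add: less_le)
    moreover then have "pmf pUX (u, x) = 0" using pUX_le_pU[of pUX u x] by (simp add: order_antisym)
    ultimately show ?thesis by (simp add: F_def wt_def)
  next
    case pu: True
    have l: "pmf (map_pmf fst pUX) u * (pmf (QZ pUX W u) z powr (-s) * (pmf (cond_X_given_U pUX u) x * pmf (ZW W x) z powr (1 + s)))
        = pmf pUX (u, x) * (pmf (QZ pUX W u) z powr (-s) * pmf (ZW W x) z powr (1 + s))"
      using pU_cond[OF pu, of x] by (simp add: algebra_simps)
    show ?thesis
    proof (cases "wt pUX W (u, x, z) > 0")
      case True
      then have a: "pmf pUX (u, x) > 0" and b: "pmf (ZW W x) z > 0"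
        unfolding wt_def by (auto simp: zero_less_mult_iff)
      have q: "pmf (QZ pUX W u) z > 0" by (rule QZ_pos[OF a b])
      have "pmf (ZW W x) z powr (1 + s) = pmf (ZW W x) z * pmf (ZW W x) z powr s"
        by (simp add: powr_mult_base)
      then show ?thesis unfolding l F_def using True q
        by (simp add: wt_def rt_def powr_divide powr_minus divide_inverse mult_ac powr_mult inverse_powr)
    next
      case False
      then have "pmf pUX (u, x) = 0 \<or> pmf (ZW W x) z = 0"
        unfolding wt_def by (auto simp: zero_less_mult_iff less_le)
      then show ?thesis unfolding l F_def using False by auto
    qed
  qed
  have "measure_pmf.expectation (map_pmf fst pUX)
      (\<lambda>u. \<Sum>z\<in>UNIV. pmf (QZ pUX W u) z powr (-s)
            * measure_pmf.expectation (cond_X_given_U pUX u) (\<lambda>x. pmf (ZW W x) z powr (1 + s)))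
     = (\<Sum>u\<in>UNIV. \<Sum>z\<in>UNIV. \<Sum>x\<in>UNIV. pmf (map_pmf fst pUX) u * (pmf (QZ pUX W u) z powr (-s) * (pmf (cond_X_given_U pUX u) x * pmf (ZW W x) z powr (1 + s))))"
    unfolding expect_finite by (simp add: sum_distrib_left)
  also have "\<dots> = (\<Sum>u\<in>UNIV. \<Sum>z\<in>UNIV. \<Sum>x\<in>UNIV. F (u, x, z))" by (simp only: key)
  also have "\<dots> = (\<Sum>u\<in>UNIV. \<Sum>x\<in>UNIV. \<Sum>z\<in>UNIV. F (u, x, z))"
    by (intro sum.cong refl) (rule sum.swap)
  also have "\<dots> = (\<Sum>t\<in>UNIV. F t)" by (rule sum_UNIV3[symmetric])
  also have "\<dots> = (\<Sum>t\<in>{t. wt pUX W t > 0}. wt pUX W t * rt pUX W t powr s)"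
    unfolding F_def by (subst sum.inter_filter[symmetric]) auto
  finally show ?thesis .
qed

lemma I_eq:
  fixes pUX :: "('u::finite \<times> 'x::finite) pmf" and W :: "'x \<Rightarrow> ('y::finite \<times> 'z::finite) pmf"
  shows "cond_mutual_info (UXZ_pmf pUX W) = (\<Sum>t\<in>{t. wt pUX W t > 0}. wt pUX W t * log 2 (rt pUX W t))"
proof -
  have P: "pmf (UXZ_pmf pUX W) t = wt pUX W t" for t
    by (cases t) (simp add: pmf_UXZ wt_def)
  have s1: "(\<Sum>z\<in>UNIV. pmf (ZW W x) z) = 1" for x by (simp add: sum_pmf_eq_1)
  have pUd: "(\<Sum>x\<in>UNIV. \<Sum>z\<in>UNIV. pmf (UXZ_pmf pUX W) (u, x, z)) = pmf (map_pmf fst pUX) u" for u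
    by (simp add: pmf_UXZ sum_distrib_left[symmetric] s1 pmf_pU)
  have pUXd: "(\<Sum>z\<in>UNIV. pmf (UXZ_pmf pUX W) (u, x, z)) = pmf pUX (u, x)" for u x
    by (simp add: pmf_UXZ sum_distrib_left[symmetric] s1)
  have pUZd: "(\<Sum>x\<in>UNIV. pmf (UXZ_pmf pUX W) (u, x, z)) = pmf (map_pmf fst pUX) u * pmf (QZ pUX W u) z"
    if pu: "pmf (map_pmf fst pUX) u > 0" for u z
    by (simp add: pmf_UXZ pmf_QZ sum_distrib_left pU_cond[OF pu] mult.assoc[symmetric])
  show ?thesis
    unfolding cond_mutual_info_def Let_def P
  proof (intro sum.cong refl)
    fix t assume t: "t \<in> {t. wt pUX W t > 0}"
    obtain u x z where tt: "t = (u, x, z)" by (cases t) auto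
    have a: "pmf pUX (u, x) > 0" and b: "pmf (ZW W x) z > 0"
      using t unfolding tt wt_def by (auto simp: zero_less_mult_iff)
    have pu: "pmf (map_pmf fst pUX) u > 0" using a pUX_le_pU[of pUX u x] by linarith
    have q: "pmf (QZ pUX W u) z > 0" by (rule QZ_pos[OF a b])
    have pUXd': "(\<Sum>z\<in>UNIV. wt pUX W (u, x', z)) = pmf pUX (u, x')" for x' using pUXd[of u x'] by (simp add: P)
    have pUd': "(\<Sum>x\<in>UNIV. pmf pUX (u, x)) = pmf (map_pmf fst pUX) u" by (simp add: pmf_pU)
    have pUZd': "(\<Sum>x\<in>UNIV. wt pUX W (u, x, z)) = pmf (map_pmf fst pUX) u * pmf (QZ pUX W u) z"
      using pUZd[OF pu, of z] by (simp add: P)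
    have e: "wt pUX W (u, x, z) * (\<Sum>x\<in>UNIV. \<Sum>z\<in>UNIV. wt pUX W (u, x, z)) /
              ((\<Sum>z\<in>UNIV. wt pUX W (u, x, z)) * (\<Sum>x\<in>UNIV. wt pUX W (u, x, z)))
        = rt pUX W (u, x, z)"
      unfolding pUXd' pUd' pUZd' using a pu q by (simp add: wt_def rt_def field_simps)
    show "(case t of (u, x, z) \<Rightarrow> wt pUX W (u, x, z) * log 2 (wt pUX W (u, x, z) *
              (\<Sum>x\<in>UNIV. \<Sum>z\<in>UNIV. wt pUX W (u, x, z)) /
              ((\<Sum>z\<in>UNIV. wt pUX W (u, x, z)) * (\<Sum>x\<in>UNIV. wt pUX W (u, x, z)))))
          = wt pUX W t * log 2 (rt pUX W t)"
      unfolding tt by (simp only: prod.case e)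
  qed
qed



lemma num_idx_ge: "real (num_idx n r) \<ge> 2 powr (real n * r)"
  unfolding num_idx_def by (rule real_nat_ceiling_ge)

lemma num_idx_pos: "num_idx n r > 0"
proof -
  have "(2::real) powr (real n * r) > 0" by simp
  then have "real (num_idx n r) > 0" using num_idx_ge[of n r] by linarith
  then show ?thesis by simp
qed

lemma pmf_bind_Pair:
  "pmf (bind_pmf M (\<lambda>zs. return_pmf (m', zs))) (m, zs) = (if m' = m then pmf M zs else 0)"
proof -
  have e: "bind_pmf M (\<lambda>zs. return_pmf (m', zs)) = map_pmf (Pair m') M" by (simp add: map_pmf_def)
  show ?thesis
  proof (cases "m' = m")
    case True
    have "inj (Pair m')" by (auto simp: inj_on_def)
    then show ?thesis unfolding e using True pmf_map_inj'[OF \<open>inj (Pair m')\<close>, of M zs] by simp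
  next
    case False
    then have "Pair m' -` {(m, zs)} = {}" by auto
    then show ?thesis unfolding e using False by (simp add: pmf_map)
  qed
qed

definition Pz :: "('x \<Rightarrow> ('y \<times> 'z) pmf) \<Rightarrow> nat \<Rightarrow> ('u, 'x) codebook \<Rightarrow> nat \<Rightarrow> nat \<Rightarrow> nat \<Rightarrow> (nat \<Rightarrow> 'z) pmf" where
  "Pz W n C m0 m k = Pi_pmf {..<n} undefined (\<lambda>t. map_pmf snd (W (snd C (m0, m, k, t))))"

definition AA :: "('x \<Rightarrow> ('y \<times> 'z) pmf) \<Rightarrow> nat \<Rightarrow> nat \<Rightarrow> nat \<Rightarrow> ('u, 'x) codebook \<Rightarrow> nat \<Rightarrow> (nat \<Rightarrow> 'z) \<Rightarrow> real" where
  "AA W n N0 K C m zs = (\<Sum>m0<N0. (\<Sum>k<K. pmf (Pz W n C m0 m k) zs) / K) / N0"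

lemma pmf_MZ:
  "pmf (MZ_pmf W n R0 R Rr C) (m, zs)
     = (if m < num_idx n R then AA W n (num_idx n R0) (num_idx n Rr) C m zs / num_idx n R else 0)"
proof -
  have n0: "{..<num_idx n R0} \<noteq> {}" "{..<num_idx n R} \<noteq> {}" "{..<num_idx n Rr} \<noteq> {}"
    using num_idx_pos by auto
  have "pmf (MZ_pmf W n R0 R Rr C) (m, zs)
      = (\<Sum>m0<num_idx n R0. (\<Sum>m'<num_idx n R. (\<Sum>k<num_idx n Rr.
           (if m' = m then pmf (Pz W n C m0 m' k) zs else 0)) / num_idx n Rr) / num_idx n R) / num_idx n R0"
    unfolding MZ_pmf_def Pz_def[symmetric] using n0 by (simp add: pmf_bind_pmf_of_set pmf_bind_Pair)
  also have "\<dots> = (\<Sum>m0<num_idx n R0. (\<Sum>m'<num_idx n R. (if m' = m then (\<Sum>k<num_idx n Rr.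
           pmf (Pz W n C m0 m' k) zs) / num_idx n Rr else 0)) / num_idx n R) / num_idx n R0"
    by (intro arg_cong2[where f="(/)"] sum.cong refl) auto
  also have "\<dots> = (if m < num_idx n R then AA W n (num_idx n R0) (num_idx n Rr) C m zs / num_idx n R else 0)"
    unfolding AA_def by (simp add: sum.delta' sum_divide_distrib mult_ac)
  finally show ?thesis .
qed

lemma map_fst_MZ: "map_pmf fst (MZ_pmf W n R0 R Rr C) = pmf_of_set {..<num_idx n R}"
  unfolding MZ_pmf_def by (simp add: map_bind_pmf bind_return_pmf')

lemma pmf_snd_MZ:
  "pmf (map_pmf snd (MZ_pmf W n R0 R Rr C)) zs
     = (\<Sum>m<num_idx n R. AA W n (num_idx n R0) (num_idx n Rr) C m zs) / num_idx n R"
proof -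
  have n0: "{..<num_idx n R0} \<noteq> {}" "{..<num_idx n R} \<noteq> {}" "{..<num_idx n Rr} \<noteq> {}"
    using num_idx_pos by auto
  have e: "map_pmf snd (MZ_pmf W n R0 R Rr C) = bind_pmf (pmf_of_set {..<num_idx n R0}) (\<lambda>m0.
      bind_pmf (pmf_of_set {..<num_idx n R}) (\<lambda>m. bind_pmf (pmf_of_set {..<num_idx n Rr}) (\<lambda>k. Pz W n C m0 m k)))"
    unfolding MZ_pmf_def Pz_def[symmetric] by (simp add: map_bind_pmf bind_return_pmf')
  show ?thesis unfolding e AA_def using n0
    by (simp add: pmf_bind_pmf_of_set sum_divide_distrib[symmetric] sum.swap[of _ "{..<num_idx n R0}"])
qed

lemma abs_sum_div:
  fixes f :: "nat \<Rightarrow> real"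
  shows "\<bar>(\<Sum>i<N. f i) / c\<bar> \<le> (\<Sum>i<N. \<bar>f i\<bar>) / \<bar>c\<bar>"
  by (simp add: abs_divide divide_right_mono sum_abs)

lemma ineq_main:
  fixes X :: "nat \<Rightarrow> nat \<Rightarrow> 'b \<Rightarrow> real" and Q :: "nat \<Rightarrow> 'b \<Rightarrow> real" and N N0 :: nat
  assumes N: "N > 0" and N0: "N0 > 0"
  shows "(\<Sum>m<N. \<Sum>zs\<in>\<Omega>. \<bar>((\<Sum>m0<N0. X m0 m zs) / N0) / N - (1 / N) * ((\<Sum>m'<N. (\<Sum>m0<N0. X m0 m' zs) / N0) / N)\<bar>)
     \<le> 2 / (N * N0) * (\<Sum>m<N. \<Sum>m0<N0. \<Sum>zs\<in>\<Omega>. \<bar>X m0 m zs - Q m0 zs\<bar>)"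
proof -
  define A where "A = (\<lambda>m zs. (\<Sum>m0<N0. X m0 m zs) / N0)"
  define B where "B = (\<lambda>zs. (\<Sum>m0<N0. Q m0 zs) / N0)"
  have Nr: "real N > 0" and N0r: "real N0 > 0" using N N0 by auto
  have AB: "\<bar>A m zs - B zs\<bar> \<le> (\<Sum>m0<N0. \<bar>X m0 m zs - Q m0 zs\<bar>) / N0" for m zs
  proof -
    have "A m zs - B zs = (\<Sum>m0<N0. X m0 m zs - Q m0 zs) / N0"
      unfolding A_def B_def by (simp add: sum_subtractf diff_divide_distrib)
    then show ?thesis using abs_sum_div[of "\<lambda>m0. X m0 m zs - Q m0 zs" N0 "real N0"] N0r by simp
  qed
  have per: "(\<Sum>m<N. \<bar>A m zs / N - (1 / N) * ((\<Sum>m'<N. A m' zs) / N)\<bar>)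
      \<le> 2 / N * (\<Sum>m<N. \<bar>A m zs - B zs\<bar>)" for zs
  proof -
    define Ab where "Ab = (\<Sum>m'<N. A m' zs) / N"
    have "Ab - B zs = (\<Sum>m'<N. A m' zs - B zs) / N"
      unfolding Ab_def using Nr by (simp add: sum_subtractf diff_divide_distrib)
    then have AbB: "\<bar>Ab - B zs\<bar> \<le> (\<Sum>m'<N. \<bar>A m' zs - B zs\<bar>) / N"
      using abs_sum_div[of "\<lambda>m'. A m' zs - B zs" N "real N"] Nr by simp
    have "(\<Sum>m<N. \<bar>A m zs / N - (1 / N) * Ab\<bar>) = (\<Sum>m<N. \<bar>A m zs - Ab\<bar>) / N"
      using Nr by (simp add: sum_divide_distrib[symmetric] diff_divide_distrib[symmetric] abs_divide)
    also have "(\<Sum>m<N. \<bar>A m zs - Ab\<bar>) \<le> (\<Sum>m<N. \<bar>A m zs - B zs\<bar> + (\<Sum>m'<N. \<bar>A m' zs - B zs\<bar>) / N)"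
    proof (rule sum_mono)
      fix m
      have "\<bar>A m zs - Ab\<bar> \<le> \<bar>A m zs - B zs\<bar> + \<bar>Ab - B zs\<bar>" by linarith
      then show "\<bar>A m zs - Ab\<bar> \<le> \<bar>A m zs - B zs\<bar> + (\<Sum>m'<N. \<bar>A m' zs - B zs\<bar>) / N" using AbB by linarith
    qed
    also have "\<dots> = 2 * (\<Sum>m<N. \<bar>A m zs - B zs\<bar>)" using Nr by (simp add: sum.distrib)
    finally show ?thesis using Nr unfolding Ab_def by (simp add: divide_right_mono)
  qed
  have "(\<Sum>m<N. \<Sum>zs\<in>\<Omega>. \<bar>A m zs / N - (1 / N) * ((\<Sum>m'<N. A m' zs) / N)\<bar>)
      = (\<Sum>zs\<in>\<Omega>. \<Sum>m<N. \<bar>A m zs / N - (1 / N) * ((\<Sum>m'<N. A m' zs) / N)\<bar>)" by (rule sum.swap)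
  also have "\<dots> \<le> (\<Sum>zs\<in>\<Omega>. 2 / N * (\<Sum>m<N. \<bar>A m zs - B zs\<bar>))" by (rule sum_mono) (rule per)
  also have "\<dots> \<le> (\<Sum>zs\<in>\<Omega>. 2 / N * (\<Sum>m<N. (\<Sum>m0<N0. \<bar>X m0 m zs - Q m0 zs\<bar>) / N0))"
    using Nr by (intro sum_mono mult_left_mono AB) auto
  also have "\<dots> = 2 / (N * N0) * (\<Sum>m<N. \<Sum>m0<N0. \<Sum>zs\<in>\<Omega>. \<bar>X m0 m zs - Q m0 zs\<bar>)"
  proof -
    have "(\<Sum>zs\<in>\<Omega>. 2 / N * (\<Sum>m<N. (\<Sum>m0<N0. \<bar>X m0 m zs - Q m0 zs\<bar>) / N0))
        = 2 / (N * N0) * (\<Sum>zs\<in>\<Omega>. \<Sum>m<N. \<Sum>m0<N0. \<bar>X m0 m zs - Q m0 zs\<bar>)"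
      by (simp add: sum_distrib_left sum_divide_distrib[symmetric] mult_ac)
    also have "(\<Sum>zs\<in>\<Omega>. \<Sum>m<N. \<Sum>m0<N0. \<bar>X m0 m zs - Q m0 zs\<bar>) = (\<Sum>m<N. \<Sum>m0<N0. \<Sum>zs\<in>\<Omega>. \<bar>X m0 m zs - Q m0 zs\<bar>)"
      by (subst sum.swap) (intro sum.cong refl, rule sum.swap)
    finally show ?thesis .
  qed
  finally show ?thesis unfolding A_def .
qed

lemma AA_notin:
  fixes n :: nat
  assumes "zs \<notin> PiE {..<n} (\<lambda>_. UNIV)"
  shows "AA W n N0 K C m zs = 0"
  unfolding AA_def Pz_def using assms by (simp add: pmf_Pi_notin)

lemma var_MZ_bound:
  fixes W :: "'x \<Rightarrow> ('y \<times> 'z::finite) pmf" and C :: "('u, 'x) codebook" and Q :: "nat \<Rightarrow> (nat \<Rightarrow> 'z) \<Rightarrow> real"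
  shows "var_dist (MZ_pmf W n R0 R Rr C)
           (pair_pmf (map_pmf fst (MZ_pmf W n R0 R Rr C)) (map_pmf snd (MZ_pmf W n R0 R Rr C)))
     \<le> 2 / (num_idx n R * num_idx n R0) * (\<Sum>m<num_idx n R. \<Sum>m0<num_idx n R0.
           \<Sum>zs\<in>PiE {..<n} (\<lambda>_. UNIV). \<bar>(\<Sum>k<num_idx n Rr. pmf (Pz W n C m0 m k) zs) / num_idx n Rr - Q m0 zs\<bar>)"
proof -
  define N where "N = num_idx n R"
  define N0 where "N0 = num_idx n R0"
  define K where "K = num_idx n Rr"
  define \<Omega> where "\<Omega> = PiE {..<n} (\<lambda>_. UNIV :: 'z set)"
  have finO: "finite \<Omega>" unfolding \<Omega>_def by (simp add: finite_PiE)
  have N: "N > 0" and N0: "N0 > 0" unfolding N_def N0_def by (auto intro: num_idx_pos)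
  define M where "M = MZ_pmf W n R0 R Rr C"
  have pM: "pmf M (m, zs) = (if m < N then AA W n N0 K C m zs / N else 0)" for m zs
    unfolding M_def N_def N0_def K_def by (rule pmf_MZ)
  have pP: "pmf (pair_pmf (map_pmf fst M) (map_pmf snd M)) (m, zs)
      = indicator {..<N} m / N * ((\<Sum>m'<N. AA W n N0 K C m' zs) / N)" for m zs
  proof -
    have ne: "{..<num_idx n R} \<noteq> {}" using num_idx_pos[of n R] by auto
    show ?thesis unfolding M_def N_def N0_def K_def using ne by (simp add: pmf_pair map_fst_MZ pmf_snd_MZ)
  qed
  have "var_dist M (pair_pmf (map_pmf fst M) (map_pmf snd M))
      = (\<Sum>a\<in>{..<N} \<times> \<Omega>. \<bar>pmf M a - pmf (pair_pmf (map_pmf fst M) (map_pmf snd M)) a\<bar>)"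
  proof (rule var_dist_finite)
    show "finite ({..<N} \<times> \<Omega>)" using finO by simp
  next
    fix a assume a: "a \<notin> {..<N} \<times> \<Omega>"
    obtain m zs where mz: "a = (m, zs)" by (cases a) auto
    then have c: "m \<ge> N \<or> zs \<notin> \<Omega>" using a by auto
    have z: "zs \<notin> \<Omega> \<Longrightarrow> AA W n N0 K C m' zs = 0" for m' unfolding \<Omega>_def by (rule AA_notin)
    show "pmf M a = 0" "pmf (pair_pmf (map_pmf fst M) (map_pmf snd M)) a = 0"
      unfolding mz pM pP using c z by auto
  qed
  also have "\<dots> = (\<Sum>m<N. \<Sum>zs\<in>\<Omega>. \<bar>((\<Sum>m0<N0. (\<Sum>k<K. pmf (Pz W n C m0 m k) zs) / K) / N0) / N
        - (1 / N) * ((\<Sum>m'<N. (\<Sum>m0<N0. (\<Sum>k<K. pmf (Pz W n C m0 m' k) zs) / K) / N0) / N)\<bar>)"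
    unfolding sum.cartesian_product' pM pP by (intro sum.cong refl) (simp add: AA_def)
  also have "\<dots> \<le> 2 / (N * N0) * (\<Sum>m<N. \<Sum>m0<N0. \<Sum>zs\<in>\<Omega>. \<bar>(\<Sum>k<K. pmf (Pz W n C m0 m k) zs) / K - Q m0 zs\<bar>)"
    by (rule ineq_main[OF N N0])
  finally show ?thesis unfolding M_def N_def N0_def K_def \<Omega>_def .
qed



lemma expect_bind_le:
  fixes f :: "'b \<Rightarrow> real"
  assumes "finite (set_pmf M)" "\<And>x. x \<in> set_pmf M \<Longrightarrow> finite (set_pmf (N x))"
    and "\<And>x. x \<in> set_pmf M \<Longrightarrow> measure_pmf.expectation (N x) f \<le> h x"
  shows "measure_pmf.expectation (bind_pmf M N) f \<le> measure_pmf.expectation M h"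
proof -
  have "measure_pmf.expectation (bind_pmf M N) f = (\<Sum>a\<in>set_pmf M. pmf M a * measure_pmf.expectation (N a) f)"
    using assms by (subst pmf_expectation_bind[of "set_pmf M"]) auto
  also have "\<dots> \<le> (\<Sum>a\<in>set_pmf M. pmf M a * h a)"
    using assms by (intro sum_mono mult_left_mono) auto
  also have "\<dots> = measure_pmf.expectation M h"
    using assms by (subst integral_measure_pmf_real[of "set_pmf M"]) (auto simp: mult.commute)
  finally show ?thesis .
qed

lemma rows_dist:
  fixes F :: "nat \<times> nat \<times> nat \<times> nat \<Rightarrow> 'x pmf"
  assumes "m0 < N0" "m < N"
  shows "map_pmf (\<lambda>cx k t. cx (m0, m, k, t)) (Pi_pmf ({..<N0} \<times> {..<N} \<times> {..<K} \<times> {..<n}) d F)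
       = Pi_pmf {..<K} (\<lambda>_. d) (\<lambda>k. Pi_pmf {..<n} d (\<lambda>t. F (m0, m, k, t)))"
proof -
  define g where "g = (\<lambda>p :: nat \<times> nat. (m0, m, fst p, snd p))"
  have inj: "inj g" unfolding g_def by (auto simp: inj_on_def)
  have gA: "g b \<in> {..<N0} \<times> {..<N} \<times> {..<K} \<times> {..<n} \<longleftrightarrow> b \<in> {..<K} \<times> {..<n}" for b
    using assms unfolding g_def by (cases b) auto
  have e: "(\<lambda>cx k t. cx (m0, m, k, t)) = (\<lambda>x k t. x (k, t)) \<circ> (\<lambda>cx. cx \<circ> g)"
    unfolding g_def by (auto simp: fun_eq_iff)
  have "map_pmf (\<lambda>cx k t. cx (m0, m, k, t)) (Pi_pmf ({..<N0} \<times> {..<N} \<times> {..<K} \<times> {..<n}) d F)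
      = map_pmf (\<lambda>x k t. x (k, t)) (map_pmf (\<lambda>cx. cx \<circ> g) (Pi_pmf ({..<N0} \<times> {..<N} \<times> {..<K} \<times> {..<n}) d F))"
    unfolding e by (simp add: pmf.map_comp)
  also have "map_pmf (\<lambda>cx. cx \<circ> g) (Pi_pmf ({..<N0} \<times> {..<N} \<times> {..<K} \<times> {..<n}) d F)
      = Pi_pmf ({..<K} \<times> {..<n}) d (F \<circ> g)"
    by (rule Pi_pmf_reindex[OF _ _ inj gA]) auto
  also have "map_pmf (\<lambda>x k t. x (k, t)) \<dots> = Pi_pmf {..<K} (\<lambda>_. d) (\<lambda>k. Pi_pmf {..<n} d (\<lambda>t. (F \<circ> g) (k, t)))"
    by (rule Pi_pmf_curry) auto
  finally show ?thesis unfolding g_def by (simp add: o_def)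
qed

lemma prod_row:
  fixes g :: "'u \<Rightarrow> real" and N0 n :: nat
  assumes "m0 < N0"
  shows "(\<Prod>p\<in>{..<N0} \<times> {..<n}. (if fst p = m0 then g else (\<lambda>_. 1)) (cu p)) = (\<Prod>t<n. g (cu (m0, t)))"
proof -
  have "(\<Prod>p\<in>{..<N0} \<times> {..<n}. (if fst p = m0 then g else (\<lambda>_. 1)) (cu p))
      = (\<Prod>i<N0. \<Prod>t<n. (if i = m0 then g else (\<lambda>_. 1)) (cu (i, t)))"
    by (subst prod.cartesian_product') simp
  also have "\<dots> = (\<Prod>i<N0. if i = m0 then (\<Prod>t<n. g (cu (i, t))) else 1)"
    by (intro prod.cong refl) auto
  also have "\<dots> = (\<Prod>t<n. g (cu (m0, t)))" using assms by (simp add: prod.delta')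
  finally show ?thesis .
qed

lemma expect_row:
  fixes g :: "'u::finite \<Rightarrow> real" and N0 n :: nat and pU :: "'u pmf"
  assumes "m0 < N0" "\<And>u. g u \<ge> 0"
  shows "measure_pmf.expectation (Pi_pmf ({..<N0} \<times> {..<n}) d (\<lambda>_. pU)) (\<lambda>cu. \<Prod>t<n. g (cu (m0, t)))
       = (measure_pmf.expectation pU g) ^ n"
proof -
  define G where "G = (\<lambda>p :: nat \<times> nat. if fst p = m0 then g else (\<lambda>_. 1))"
  have "measure_pmf.expectation (Pi_pmf ({..<N0} \<times> {..<n}) d (\<lambda>_. pU)) (\<lambda>cu. \<Prod>t<n. g (cu (m0, t)))
      = measure_pmf.expectation (Pi_pmf ({..<N0} \<times> {..<n}) d (\<lambda>_. pU)) (\<lambda>cu. \<Prod>p\<in>{..<N0} \<times> {..<n}. G p (cu p))"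
    unfolding G_def by (subst prod_row[OF assms(1)]) (rule refl)
  also have "\<dots> = (\<Prod>p\<in>{..<N0} \<times> {..<n}. measure_pmf.expectation pU (G p))"
    by (rule expectation_prod_Pi_pmf) (auto simp: fin_int G_def assms(2))
  also have "\<dots> = (\<Prod>p\<in>{..<N0} \<times> {..<n}. (if fst p = m0 then (\<lambda>_. measure_pmf.expectation pU g) else (\<lambda>_. 1)) p)"
    by (intro prod.cong refl) (simp add: G_def)
  also have "\<dots> = (\<Prod>t<n. measure_pmf.expectation pU g)"
    using prod_row[OF assms(1), of "\<lambda>_. measure_pmf.expectation pU g" "\<lambda>p. p" n] by simp
  finally show ?thesis by simp
qed



definition gfun :: "('u \<times> 'x) pmf \<Rightarrow> ('x \<Rightarrow> ('y \<times> 'z::finite) pmf) \<Rightarrow> real \<Rightarrow> 'u \<Rightarrow> real" where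
  "gfun pUX W s u = (\<Sum>z\<in>UNIV. pmf (QZ pUX W u) z powr (-s)
       * measure_pmf.expectation (cond_X_given_U pUX u) (\<lambda>x. pmf (ZW W x) z powr (1 + s)))"

lemma gfun_nonneg: "gfun pUX W s u \<ge> 0"
  unfolding gfun_def by (intro sum_nonneg mult_nonneg_nonneg integral_nonneg) auto

lemma codebook_row_bound:
  fixes pUX :: "('u::finite \<times> 'x::finite) pmf" and W :: "'x \<Rightarrow> ('y::finite \<times> 'z::finite) pmf"
  assumes m0: "m0 < num_idx n R0" and m: "m < num_idx n R" and T: "T > 0" and s: "s \<ge> 0"
  shows "measure_pmf.expectation (codebook_pmf pUX n R0 R Rr)
     (\<lambda>C. \<Sum>zs\<in>PiE {..<n} (\<lambda>_. UNIV). \<bar>(\<Sum>k<num_idx n Rr. pmf (Pz W n C m0 m k) zs) / num_idx n Rr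
          - pmf (Pi_pmf {..<n} undefined (\<lambda>t. QZ pUX W (fst C (m0, t)))) zs\<bar>)
   \<le> sqrt (T / num_idx n Rr) + 2 * T powr (-s) * (measure_pmf.expectation (map_pmf fst pUX) (gfun pUX W s)) ^ n"
proof -
  define N0 where "N0 = num_idx n R0"
  define N where "N = num_idx n R"
  define K where "K = num_idx n Rr"
  have K0: "K > 0" unfolding K_def by (rule num_idx_pos)
  define BIG where "BIG = {..<N0} \<times> {..<N} \<times> {..<K} \<times> {..<n}"
  define CU where "CU = Pi_pmf ({..<N0} \<times> {..<n}) undefined (\<lambda>_. map_pmf fst pUX)"
  define CX where "CX = (\<lambda>cu. Pi_pmf BIG undefined (\<lambda>(i, j, k, t). cond_X_given_U pUX (cu (i, t))))"
  define f where "f = (\<lambda>C. \<Sum>zs\<in>PiE {..<n} (\<lambda>_. UNIV). \<bar>(\<Sum>k<K. pmf (Pz W n C m0 m k) zs) / K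
          - pmf (Pi_pmf {..<n} undefined (\<lambda>t. QZ pUX W (fst C (m0, t)))) zs\<bar>)"
  define h where "h = (\<lambda>cu. sqrt (T / K) + 2 * T powr (-s) * (\<Prod>t<n. gfun pUX W s (cu (m0, t))))"
  have CB: "codebook_pmf pUX n R0 R Rr = bind_pmf CU (\<lambda>cu. bind_pmf (CX cu) (\<lambda>cx. return_pmf (cu, cx)))"
    unfolding codebook_pmf_def CU_def CX_def BIG_def N0_def N_def K_def ..
  have finCU: "finite (set_pmf CU)" unfolding CU_def by (rule finite_set_Pi_pmf) auto
  have finCX: "finite (set_pmf (CX cu))" for cu unfolding CX_def BIG_def by (rule finite_set_Pi_pmf) auto
  have step: "measure_pmf.expectation (bind_pmf (CX cu) (\<lambda>cx. return_pmf (cu, cx))) f \<le> h cu" for cu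
  proof -
    define \<mu> where "\<mu> = (\<lambda>t. cond_X_given_U pUX (cu (m0, t)))"
    define Psi where "Psi = (\<lambda>x :: nat \<Rightarrow> nat \<Rightarrow> 'x. \<Sum>zs\<in>PiE {..<n} (\<lambda>_. UNIV).
                \<bar>(\<Sum>k<K. pmf (Pi_pmf {..<n} undefined (\<lambda>t. ZW W (x k t))) zs) / K
                 - pmf (Pi_pmf {..<n} undefined (\<lambda>t. bind_pmf (\<mu> t) (ZW W))) zs\<bar>)"
    have e1: "bind_pmf (CX cu) (\<lambda>cx. return_pmf (cu, cx)) = map_pmf (Pair cu) (CX cu)"
      by (simp add: map_pmf_def)
    have e2: "f (cu, cx) = Psi (\<lambda>k t. cx (m0, m, k, t))" for cx
      unfolding f_def Psi_def Pz_def ZW_def QZ_def \<mu>_def by simp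
    have e3: "map_pmf (\<lambda>cx k t. cx (m0, m, k, t)) (CX cu)
        = Pi_pmf {..<K} (\<lambda>_. undefined) (\<lambda>k. Pi_pmf {..<n} undefined \<mu>)"
    proof -
      have a: "m0 < N0" "m < N" using m0 m by (simp_all add: N0_def N_def)
      show ?thesis
        using rows_dist[OF a, where F="\<lambda>(i, j, k, t). cond_X_given_U pUX (cu (i, t))" and K=K and n=n and d=undefined]
        by (simp add: CX_def BIG_def \<mu>_def)
    qed
    have "measure_pmf.expectation (bind_pmf (CX cu) (\<lambda>cx. return_pmf (cu, cx))) f
        = measure_pmf.expectation (CX cu) (\<lambda>cx. Psi (\<lambda>k t. cx (m0, m, k, t)))"
      unfolding e1 by (simp add: e2)
    also have "\<dots> = measure_pmf.expectation (map_pmf (\<lambda>cx k t. cx (m0, m, k, t)) (CX cu)) Psi"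
      by simp
    also have "\<dots> = measure_pmf.expectation (Pi_pmf {..<K} (\<lambda>_. undefined) (\<lambda>_. Pi_pmf {..<n} undefined \<mu>)) Psi"
      unfolding e3 ..
    also have "\<dots> \<le> sqrt (T / K) + 2 * T powr (-s) *
             (\<Prod>t<n. \<Sum>z\<in>UNIV. pmf (bind_pmf (\<mu> t) (ZW W)) z powr (-s)
                        * measure_pmf.expectation (\<mu> t) (\<lambda>x. pmf (ZW W x) z powr (1 + s)))"
      unfolding Psi_def by (rule soft_cover_rows[OF K0 T s])
    also have "\<dots> = h cu" unfolding h_def gfun_def \<mu>_def QZ_def ..
    finally show ?thesis .
  qed
  have "measure_pmf.expectation (codebook_pmf pUX n R0 R Rr) f \<le> measure_pmf.expectation CU h"
    unfolding CB by (rule expect_bind_le[OF finCU]) (auto simp: finCX step)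
  also have "measure_pmf.expectation CU h
      = sqrt (T / K) + 2 * T powr (-s) * measure_pmf.expectation CU (\<lambda>cu. \<Prod>t<n. gfun pUX W s (cu (m0, t)))"
    unfolding h_def by (simp add: fin_int finCU)
  also have "measure_pmf.expectation CU (\<lambda>cu. \<Prod>t<n. gfun pUX W s (cu (m0, t)))
      = (measure_pmf.expectation (map_pmf fst pUX) (gfun pUX W s)) ^ n"
    unfolding CU_def by (rule expect_row) (auto simp: N0_def m0 gfun_nonneg)
  finally show ?thesis unfolding f_def K_def .
qed



lemma final_arith:
  fixes I \<delta> s \<phi> Rr Kr :: real and n :: nat
  assumes d: "\<delta> > 0" and s0: "s > 0" and s1: "s \<le> 1" and phi0: "\<phi> \<ge> 0"
    and phi: "\<phi> \<le> 2 powr (s * (I + \<delta>))" and Rr: "Rr = I + 3 * \<delta>"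
    and K: "Kr \<ge> 2 powr (real n * Rr)"
  shows "2 * (sqrt (2 powr (real n * (I + 2 * \<delta>)) / Kr) + 2 * (2 powr (real n * (I + 2 * \<delta>))) powr (-s) * \<phi> ^ n)
       \<le> 6 * 2 powr (- real n * (s * \<delta> / 2))"
proof -
  define T where "T = 2 powr (real n * (I + 2 * \<delta>))"
  have "(2::real) powr (real n * Rr) > 0" by simp
  then have Kp: "Kr > 0" using K by linarith
  have "T / Kr \<le> T / 2 powr (real n * Rr)"
    using K Kp unfolding T_def by (intro divide_left_mono) auto
  also have "\<dots> = 2 powr (- real n * \<delta>)"
    unfolding T_def Rr by (simp add: powr_diff[symmetric] algebra_simps)
  finally have TK: "T / Kr \<le> 2 powr (- real n * \<delta>)" .
  have "sqrt (T / Kr) \<le> sqrt (2 powr (- real n * \<delta>))" using TK by simp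
  also have "\<dots> = 2 powr ((- real n * \<delta>) / 2)" by (rule powr_half_sqrt_powr[symmetric]) simp
  also have "\<dots> \<le> 2 powr (- real n * (s * \<delta> / 2))"
    using s1 d by (simp add: mult_left_mono)
  finally have A: "sqrt (T / Kr) \<le> 2 powr (- real n * (s * \<delta> / 2))" .
  have "T powr (-s) * \<phi> ^ n \<le> T powr (-s) * (2 powr (s * (I + \<delta>))) ^ n"
    using phi phi0 by (intro mult_left_mono power_mono) auto
  also have "\<dots> = 2 powr (- real n * (s * \<delta>))"
    unfolding T_def by (simp add: powr_powr powr_power powr_add[symmetric] algebra_simps)
  also have "\<dots> \<le> 2 powr (- real n * (s * \<delta> / 2))"
    using s0 d by (simp add: mult_left_mono)
  finally have B: "T powr (-s) * \<phi> ^ n \<le> 2 powr (- real n * (s * \<delta> / 2))" .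
  show ?thesis using A B unfolding T_def by (simp add: mult.assoc)
qed

lemma finite_CB:
  fixes pUX :: "('u::finite \<times> 'x::finite) pmf"
  shows "finite (set_pmf (codebook_pmf pUX n R0 R Rr))"
proof -
  define CU where "CU = Pi_pmf ({..<num_idx n R0} \<times> {..<n}) undefined (\<lambda>_. map_pmf fst pUX)"
  define CX where "CX = (\<lambda>cu. Pi_pmf ({..<num_idx n R0} \<times> {..<num_idx n R} \<times> {..<num_idx n Rr} \<times> {..<n}) undefined
                  (\<lambda>(i, j, k, t). cond_X_given_U pUX (cu (i, t))))"
  have e: "codebook_pmf pUX n R0 R Rr = bind_pmf CU (\<lambda>cu. bind_pmf (CX cu) (\<lambda>cx. return_pmf (cu, cx)))"
    unfolding codebook_pmf_def CU_def CX_def ..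
  have f1: "finite (set_pmf CU)" unfolding CU_def by (rule finite_set_Pi_pmf) auto
  have f2: "finite (set_pmf (CX cu))" for cu unfolding CX_def by (rule finite_set_Pi_pmf) auto
  show ?thesis unfolding e using f1 f2 by auto
qed

lemma expect_bound_n:
  fixes pUX :: "('u::finite \<times> 'x::finite) pmf" and W :: "'x \<Rightarrow> ('y::finite \<times> 'z::finite) pmf"
  assumes T: "T > 0" and s: "s \<ge> 0"
  shows "measure_pmf.expectation (codebook_pmf pUX n R0 R Rr)
             (\<lambda>C. var_dist (MZ_pmf W n R0 R Rr C)
                     (pair_pmf (map_pmf fst (MZ_pmf W n R0 R Rr C)) (map_pmf snd (MZ_pmf W n R0 R Rr C))))
     \<le> 2 * (sqrt (T / num_idx n Rr) + 2 * T powr (-s) * (measure_pmf.expectation (map_pmf fst pUX) (gfun pUX W s)) ^ n)"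
proof -
  define N where "N = num_idx n R"
  define N0 where "N0 = num_idx n R0"
  define Bd where "Bd = sqrt (T / num_idx n Rr) + 2 * T powr (-s) * (measure_pmf.expectation (map_pmf fst pUX) (gfun pUX W s)) ^ n"
  define CB where "CB = codebook_pmf pUX n R0 R Rr"
  have fin: "finite (set_pmf CB)" unfolding CB_def by (rule finite_CB)
  define f where "f = (\<lambda>m0 m C. \<Sum>zs\<in>PiE {..<n} (\<lambda>_. UNIV). \<bar>(\<Sum>k<num_idx n Rr. pmf (Pz W n C m0 m k) zs) / num_idx n Rr
          - pmf (Pi_pmf {..<n} undefined (\<lambda>t. QZ pUX W (fst C (m0, t)))) zs\<bar>)"
  have Np: "real N > 0" "real N0 > 0" unfolding N_def N0_def by (auto intro: num_idx_pos)
  have "measure_pmf.expectation CB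
             (\<lambda>C. var_dist (MZ_pmf W n R0 R Rr C)
                     (pair_pmf (map_pmf fst (MZ_pmf W n R0 R Rr C)) (map_pmf snd (MZ_pmf W n R0 R Rr C))))
      \<le> measure_pmf.expectation CB (\<lambda>C. 2 / (N * N0) * (\<Sum>m<N. \<Sum>m0<N0. f m0 m C))"
  proof (rule integral_mono)
    fix C :: "('u, 'x) codebook"
    show "var_dist (MZ_pmf W n R0 R Rr C)
                     (pair_pmf (map_pmf fst (MZ_pmf W n R0 R Rr C)) (map_pmf snd (MZ_pmf W n R0 R Rr C)))
        \<le> 2 / (N * N0) * (\<Sum>m<N. \<Sum>m0<N0. f m0 m C)"
      unfolding f_def N_def N0_def
      by (rule var_MZ_bound[where Q="\<lambda>m0 zs. pmf (Pi_pmf {..<n} undefined (\<lambda>t. QZ pUX W (fst C (m0, t)))) zs"])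
  qed (auto simp: fin_int fin)
  also have "\<dots> = 2 / (N * N0) * (\<Sum>m<N. \<Sum>m0<N0. measure_pmf.expectation CB (f m0 m))"
    by (simp add: fin_int fin)
  also have "\<dots> \<le> 2 / (N * N0) * (\<Sum>m<N. \<Sum>m0<N0. Bd)"
  proof (intro mult_left_mono sum_mono)
    fix m m0 assume mm: "m \<in> {..<N}" "m0 \<in> {..<N0}"
    have a: "m0 < num_idx n R0" "m < num_idx n R" using mm by (simp_all add: N_def N0_def)
    show "measure_pmf.expectation CB (f m0 m) \<le> Bd"
      unfolding CB_def f_def Bd_def by (rule codebook_row_bound[OF a T s])
  qed simp
  also have "\<dots> = 2 * Bd" using Np by simp
  finally show ?thesis unfolding CB_def Bd_def .
qed

lemma sum_wt:
  fixes pUX :: "('u::finite \<times> 'x::finite) pmf" and W :: "'x \<Rightarrow> ('y::finite \<times> 'z::finite) pmf"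
  shows "(\<Sum>t\<in>{t. wt pUX W t > 0}. wt pUX W t) = 1"
proof -
  have nn: "wt pUX W t \<ge> 0" for t unfolding wt_def by (cases t) auto
  have "(\<Sum>t\<in>{t. wt pUX W t > 0}. wt pUX W t) = (\<Sum>t\<in>UNIV. wt pUX W t)"
    using nn by (intro sum.mono_neutral_left) (auto simp: order.strict_iff_order)
  also have "\<dots> = (\<Sum>u\<in>UNIV. \<Sum>x\<in>UNIV. pmf pUX (u, x))"
    unfolding sum_UNIV3 wt_def by (simp add: sum_distrib_left[symmetric] sum_pmf_eq_1)
  also have "\<dots> = (\<Sum>p\<in>UNIV \<times> UNIV. pmf pUX p)" by (subst sum.cartesian_product') simp
  also have "\<dots> = 1" by (simp add: sum_pmf_eq_1)
  finally show ?thesis .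
qed

lemma rt_pos:
  fixes pUX :: "('u::finite \<times> 'x::finite) pmf" and W :: "'x \<Rightarrow> ('y::finite \<times> 'z::finite) pmf"
  assumes "wt pUX W t > 0"
  shows "rt pUX W t > 0"
proof -
  obtain u x z where tt: "t = (u, x, z)" by (cases t) auto
  have a: "pmf pUX (u, x) > 0" and b: "pmf (ZW W x) z > 0"
    using assms unfolding tt wt_def by (auto simp: zero_less_mult_iff)
  show ?thesis unfolding tt rt_def using QZ_pos[OF a b] b by simp
qed

theorem lemma2:
  fixes pUX :: "('u::finite \<times> 'x::finite) pmf"
    and W :: "'x \<Rightarrow> ('y::finite \<times> 'z::finite) pmf"
    and R0 R Rr :: real
  assumes "R0 > 0" and "R > 0" and "Rr > 0"
    and "Rr > cond_mutual_info (UXZ_pmf pUX W)"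
  shows "\<exists>\<beta>>0. \<forall>\<^sub>F n in sequentially.
           measure_pmf.expectation (codebook_pmf pUX n R0 R Rr)
             (\<lambda>C. var_dist (MZ_pmf W n R0 R Rr C)
                     (pair_pmf (map_pmf fst (MZ_pmf W n R0 R Rr C)) (map_pmf snd (MZ_pmf W n R0 R Rr C))))
           \<le> 2 powr (- \<beta> * real n)"
proof -
  define I where "I = cond_mutual_info (UXZ_pmf pUX W)"
  define \<delta> where "\<delta> = (Rr - I) / 3"
  have d: "\<delta> > 0" using assms(4) unfolding \<delta>_def I_def by simp
  have Rr: "Rr = I + 3 * \<delta>" unfolding \<delta>_def by (simp add: field_simps)
  obtain s where s0: "s > 0" and s1: "s \<le> 1"
    and sb: "(\<Sum>t\<in>{t. wt pUX W t > 0}. wt pUX W t * rt pUX W t powr s)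
           \<le> 2 powr (s * ((\<Sum>t\<in>{t. wt pUX W t > 0}. wt pUX W t * log 2 (rt pUX W t)) + \<delta>))"
  proof -
    have "\<exists>s>0. s \<le> 1 \<and> (\<Sum>t\<in>{t. wt pUX W t > 0}. wt pUX W t * rt pUX W t powr s)
           \<le> 2 powr (s * ((\<Sum>t\<in>{t. wt pUX W t > 0}. wt pUX W t * log 2 (rt pUX W t)) + \<delta>))"
      by (rule exponent_bound[OF _ _ _ sum_wt d]) (simp_all add: rt_pos)
    then show ?thesis using that by blast
  qed
  define \<phi> where "\<phi> = measure_pmf.expectation (map_pmf fst pUX) (gfun pUX W s)"
  have phi_eq': "\<phi> = (\<Sum>t\<in>{t. wt pUX W t > 0}. wt pUX W t * rt pUX W t powr s)"
    unfolding \<phi>_def gfun_def by (rule phi_eq)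
  have phi: "\<phi> \<le> 2 powr (s * (I + \<delta>))"
    using sb unfolding phi_eq' I_def I_eq .
  have phi0: "\<phi> \<ge> 0" unfolding \<phi>_def using gfun_nonneg[of pUX W s] by simp
  define \<beta> where "\<beta> = s * \<delta> / 4"
  have b0: "\<beta> > 0" unfolding \<beta>_def using s0 d by simp
  have ev: "\<forall>\<^sub>F n in sequentially. real n \<ge> 3 / \<beta>"
    by (rule eventually_sequentiallyI[of "nat \<lceil>3 / \<beta>\<rceil>"]) linarith
  have "\<forall>\<^sub>F n in sequentially.
           measure_pmf.expectation (codebook_pmf pUX n R0 R Rr)
             (\<lambda>C. var_dist (MZ_pmf W n R0 R Rr C)
                     (pair_pmf (map_pmf fst (MZ_pmf W n R0 R Rr C)) (map_pmf snd (MZ_pmf W n R0 R Rr C))))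
           \<le> 2 powr (- \<beta> * real n)"
    using ev
  proof eventually_elim
    case (elim n)
    define T where "T = 2 powr (real n * (I + 2 * \<delta>))"
    have T: "T > 0" unfolding T_def by simp
    have "measure_pmf.expectation (codebook_pmf pUX n R0 R Rr)
             (\<lambda>C. var_dist (MZ_pmf W n R0 R Rr C)
                     (pair_pmf (map_pmf fst (MZ_pmf W n R0 R Rr C)) (map_pmf snd (MZ_pmf W n R0 R Rr C))))
        \<le> 2 * (sqrt (T / num_idx n Rr) + 2 * T powr (-s) * \<phi> ^ n)"
      unfolding \<phi>_def by (rule expect_bound_n[OF T]) (use s0 in simp)
    also have "\<dots> \<le> 6 * 2 powr (- real n * (s * \<delta> / 2))"
      unfolding T_def by (rule final_arith[OF d s0 s1 phi0 phi Rr num_idx_ge])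
    also have "\<dots> = 6 * 2 powr (- \<beta> * real n) * 2 powr (- \<beta> * real n)"
    proof -
      have "- real n * (s * \<delta> / 2) = (- \<beta> * real n) + (- \<beta> * real n)" unfolding \<beta>_def by (simp add: algebra_simps)
      then show ?thesis by (simp only: powr_add mult.assoc)
    qed
    also have "\<dots> \<le> 2 powr (- \<beta> * real n)"
    proof -
      have nb: "\<beta> * real n \<ge> 3" using elim b0 by (simp add: field_simps)
      have "(2::real) powr 3 \<le> 2 powr (\<beta> * real n)" using nb by (intro powr_mono) auto
      then have "8 \<le> (2::real) powr (\<beta> * real n)" by simp
      have p: "(2::real) powr (\<beta> * real n) > 0" by simp
      have "6 * 2 powr (- \<beta> * real n) = 6 / 2 powr (\<beta> * real n)"
        by (simp add: powr_minus divide_inverse)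
      also have "\<dots> \<le> 1" using \<open>8 \<le> (2::real) powr (\<beta> * real n)\<close> p by (simp add: divide_le_eq)
      finally have "6 * 2 powr (- \<beta> * real n) \<le> 1" .
      then show ?thesis by (simp add: mult_left_le_one_le)
    qed
    finally show ?case .
  qed
  then show ?thesis using b0 by blast
qed

end
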